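(* Let $n\geqslant0$ be an integer and $f\colon[a,b]\to\mathbb{R}$ be such that $f,f',\dots,f^{(n)}$ are continuous on $[a,b]$ and $LD_{n+1}f$ exists almost everywhere on $[a,b]$. If $LD_{n+1}f$ is Laplace integrable on $[a,b]$ with \[f^{(n)}(x)-f^{(n)}(a)=\int_a^xLD_{n+1}f\quad\text{for all }x\in[a,b],\] then for all $x\in[a,b]$, \[f(x)=\sum_{k=0}^n\frac{f^{(k)}(a)}{k!}(x-a)^k+R_{n,a}(x),\qquad R_{n,a}(x)=\frac{1}{n!}\int_a^xLD_{n+1}f(t)(x-t)^n\,dt,\] where the last integral is a Laplace integral, and moreover \[\sup_{x\in[a,b]}|R_{n,a}(x)|\leqslant\frac{(b-a)^n}{n!}\|LD_{n+1}f\|_{[a,b]}.\]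
   Context: For $f$ with $f,\dots,f^{(n)}$ continuous near $x$, $LD_{n+1}f(x)$ denotes the $(n+1)$-th order Laplace derivative: the common value, when both limits exist and are equal, of $\lim_{s\to\infty}s^{n+2}\int_0^\delta e^{-st}\big[f(x+t)-\sum_{i=0}^n\frac{t^i}{i!}f^{(i)}(x)\big]dt$ and $\lim_{s\to\infty}(-1)^{n+1}s^{n+2}\int_0^\delta e^{-st}\big[f(x-t)-\sum_{i=0}^n\frac{(-t)^i}{i!}f^{(i)}(x)\big]dt$ for some $\delta>0$ (one-sided at endpoints); for $n=0$ this is $LD_1f$. Laplace integral on $[a,b]$: with lower/upper Laplace derivates $\underline{LD}_1F(x)$, $\overline{LD}_1F(x)$ being the minimum of the $\liminf$'s, resp. maximum of the $\limsup$'s, as $s\to\infty$ of $s^2\int_0^\delta e^{-st}[F(x+t)-F(x)]dt$ and $(-s^2)\int_0^\delta e^{-st}[F(x-t)-F(x)]dt$, a major function of $h$ is a continuous $U$ with $\underline{LD}_1U\geqslant h$, $\underline{LD}_1U>-\infty$ everywhere, a minor function a continuous $V$ with $\overline{LD}_1V\leqslant h$, $\overline{LD}_1V<\infty$ everywhere, and $h$ is Laplace integrable if $\sup_V(V(b)-V(a))=\inf_U(U(b)-U(a))$ is finite, the value being $\int_a^bh$ (values on null sets are irrelevant). Alexiewicz norm: $\|h\|_{[a,b]}=\sup_{x\in[a,b]}|\int_a^xh|$. *)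

theory Defs
  imports "HOL-Analysis.Analysis"
begin

text \<open>F k stands for the k-th derivative of f (F 0 = f). The expressions below are
 the right and left Laplace-derivative expressions with parameter s and window delta.\<close>

definition LD_right :: "(nat \<Rightarrow> real \<Rightarrow> real) \<Rightarrow> nat \<Rightarrow> real \<Rightarrow> real \<Rightarrow> real \<Rightarrow> real" where
  "LD_right F n x \<delta> s = s ^ (n + 2) *
     integral {0..\<delta>} (\<lambda>t. exp (- s * t) * (F 0 (x + t) - (\<Sum>i\<le>n. t ^ i / fact i * F i x)))"

definition LD_left :: "(nat \<Rightarrow> real \<Rightarrow> real) \<Rightarrow> nat \<Rightarrow> real \<Rightarrow> real \<Rightarrow> real \<Rightarrow> real" where
  "LD_left F n x \<delta> s = (-1) ^ (n + 1) * s ^ (n + 2) *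
     integral {0..\<delta>} (\<lambda>t. exp (- s * t) * (F 0 (x - t) - (\<Sum>i\<le>n. (- t) ^ i / fact i * F i x)))"

text \<open>has_LD F n c d x L: the (n+1)-th order Laplace derivative of F 0, relative to the
 interval [c,d] (one-sided at endpoints), exists at x and equals L.\<close>

definition has_LD :: "(nat \<Rightarrow> real \<Rightarrow> real) \<Rightarrow> nat \<Rightarrow> real \<Rightarrow> real \<Rightarrow> real \<Rightarrow> real \<Rightarrow> bool" where
  "has_LD F n c d x L \<longleftrightarrow>
     (\<exists>\<delta>>0. (x < d \<longrightarrow> x + \<delta> \<le> d \<and> ((LD_right F n x \<delta>) \<longlongrightarrow> L) at_top)
          \<and> (c < x \<longrightarrow> c \<le> x - \<delta> \<and> ((LD_left F n x \<delta>) \<longlongrightarrow> L) at_top))"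

definition LDr1 :: "(real \<Rightarrow> real) \<Rightarrow> real \<Rightarrow> real \<Rightarrow> real \<Rightarrow> real" where
  "LDr1 U x \<delta> s = s\<^sup>2 * integral {0..\<delta>} (\<lambda>t. exp (- s * t) * (U (x + t) - U x))"

definition LDl1 :: "(real \<Rightarrow> real) \<Rightarrow> real \<Rightarrow> real \<Rightarrow> real \<Rightarrow> real" where
  "LDl1 U x \<delta> s = - (s\<^sup>2) * integral {0..\<delta>} (\<lambda>t. exp (- s * t) * (U (x - t) - U x))"

definition lowLD :: "(real \<Rightarrow> real) \<Rightarrow> real \<Rightarrow> real \<Rightarrow> real \<Rightarrow> real \<Rightarrow> ereal" where
  "lowLD U c d \<delta> x =
     min (if x < d then Liminf at_top (\<lambda>s. ereal (LDr1 U x \<delta> s)) else \<infinity>)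
         (if c < x then Liminf at_top (\<lambda>s. ereal (LDl1 U x \<delta> s)) else \<infinity>)"

definition upLD :: "(real \<Rightarrow> real) \<Rightarrow> real \<Rightarrow> real \<Rightarrow> real \<Rightarrow> real \<Rightarrow> ereal" where
  "upLD U c d \<delta> x =
     max (if x < d then Limsup at_top (\<lambda>s. ereal (LDr1 U x \<delta> s)) else -\<infinity>)
         (if c < x then Limsup at_top (\<lambda>s. ereal (LDl1 U x \<delta> s)) else -\<infinity>)"

definition admissible_delta :: "real \<Rightarrow> real \<Rightarrow> real \<Rightarrow> real \<Rightarrow> bool" where
  "admissible_delta c d x \<delta> \<longleftrightarrow> \<delta> > 0 \<and> (x < d \<longrightarrow> x + \<delta> \<le> d) \<and> (c < x \<longrightarrow> c \<le> x - \<delta>)"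

definition laplace_major :: "(real \<Rightarrow> real) \<Rightarrow> real \<Rightarrow> real \<Rightarrow> (real \<Rightarrow> real) \<Rightarrow> bool" where
  "laplace_major h c d U \<longleftrightarrow> continuous_on {c..d} U \<and>
     (\<forall>x\<in>{c..d}. \<exists>\<delta>. admissible_delta c d x \<delta> \<and>
        lowLD U c d \<delta> x \<ge> ereal (h x) \<and> lowLD U c d \<delta> x > -\<infinity>)"

definition laplace_minor :: "(real \<Rightarrow> real) \<Rightarrow> real \<Rightarrow> real \<Rightarrow> (real \<Rightarrow> real) \<Rightarrow> bool" where
  "laplace_minor h c d V \<longleftrightarrow> continuous_on {c..d} V \<and>
     (\<forall>x\<in>{c..d}. \<exists>\<delta>. admissible_delta c d x \<delta> \<and>
        upLD V c d \<delta> x \<le> ereal (h x) \<and> upLD V c d \<delta> x < \<infinity>)"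

definition laplace_upper_int :: "(real \<Rightarrow> real) \<Rightarrow> real \<Rightarrow> real \<Rightarrow> ereal" where
  "laplace_upper_int h c d = (INF U \<in> {U. laplace_major h c d U}. ereal (U d - U c))"

definition laplace_lower_int :: "(real \<Rightarrow> real) \<Rightarrow> real \<Rightarrow> real \<Rightarrow> ereal" where
  "laplace_lower_int h c d = (SUP V \<in> {V. laplace_minor h c d V}. ereal (V d - V c))"

definition laplace_integrable :: "(real \<Rightarrow> real) \<Rightarrow> real \<Rightarrow> real \<Rightarrow> bool" where
  "laplace_integrable h c d \<longleftrightarrow>
     laplace_lower_int h c d = laplace_upper_int h c d \<and> \<bar>laplace_upper_int h c d\<bar> \<noteq> \<infinity>"

definition laplace_integral :: "(real \<Rightarrow> real) \<Rightarrow> real \<Rightarrow> real \<Rightarrow> real" where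
  "laplace_integral h c d = real_of_ereal (laplace_upper_int h c d)"

definition alexiewicz_norm :: "(real \<Rightarrow> real) \<Rightarrow> real \<Rightarrow> real \<Rightarrow> real" where
  "alexiewicz_norm h c d = (SUP x \<in> {c..d}. \<bar>laplace_integral h c x\<bar>)"

end

theory Submission
  imports Defs "HOL-Real_Asymp.Real_Asymp"
begin


lemma texp_has_integral:
  fixes s \<eta> :: real
  assumes s: "s > 0" and eta: "\<eta> \<ge> 0"
  shows "((\<lambda>t. exp (- s * t) * t) has_integral (1 - (1 + s * \<eta>) * exp (- s * \<eta>)) / s\<^sup>2) {0..\<eta>}"
proof -
  define G where "G t = - (t / s + 1 / s\<^sup>2) * exp (- s * t)" for t
  have d: "(G has_vector_derivative exp (- s * t) * t) (at t within {0..\<eta>})" for t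
  proof -
    have "(G has_real_derivative (- (1 / s) * exp (- s * t) + (- (t / s + 1 / s\<^sup>2)) * (exp (- s * t) * (- s)))) (at t within {0..\<eta>})"
      unfolding G_def using s
      by (auto intro!: derivative_eq_intros)
    moreover have "- (1 / s) * exp (- s * t) + (- (t / s + 1 / s\<^sup>2)) * (exp (- s * t) * (- s)) = exp (- s * t) * t"
      using s by (simp add: field_simps power2_eq_square)
    ultimately show ?thesis by (simp add: has_real_derivative_iff_has_vector_derivative)
  qed
  have "((\<lambda>t. exp (- s * t) * t) has_integral G \<eta> - G 0) {0..\<eta>}"
    by (rule fundamental_theorem_of_calculus[OF eta]) (use d in auto)
  moreover have "G \<eta> - G 0 = (1 - (1 + s * \<eta>) * exp (- s * \<eta>)) / s\<^sup>2"
    using s unfolding G_def by (simp add: field_simps power2_eq_square)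
  ultimately show ?thesis by simp
qed

lemma texp_integral_le:
  fixes s \<eta> :: real
  assumes s: "s > 0" and eta: "\<eta> \<ge> 0"
  shows "s\<^sup>2 * integral {0..\<eta>} (\<lambda>t. exp (- s * t) * t) = 1 - (1 + s * \<eta>) * exp (- s * \<eta>)"
    "s\<^sup>2 * integral {0..\<eta>} (\<lambda>t. exp (- s * t) * t) \<le> 1"
proof -
  show 1: "s\<^sup>2 * integral {0..\<eta>} (\<lambda>t. exp (- s * t) * t) = 1 - (1 + s * \<eta>) * exp (- s * \<eta>)"
    using integral_unique[OF texp_has_integral[OF s eta]] s by simp
  show "s\<^sup>2 * integral {0..\<eta>} (\<lambda>t. exp (- s * t) * t) \<le> 1"
    unfolding 1 using s eta by (simp add: mult_nonneg_nonneg)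
qed

lemma texp_tendsto:
  fixes \<delta> :: real
  assumes "\<delta> > 0"
  shows "((\<lambda>s. s\<^sup>2 * integral {0..\<delta>} (\<lambda>t. exp (- s * t) * t)) \<longlongrightarrow> 1) at_top"
proof -
  have "((\<lambda>s. 1 - (1 + s * \<delta>) * exp (- s * \<delta>)) \<longlongrightarrow> 1) at_top"
    using assms by real_asymp
  moreover have "eventually (\<lambda>s. 1 - (1 + s * \<delta>) * exp (- s * \<delta>) = s\<^sup>2 * integral {0..\<delta>} (\<lambda>t. exp (- s * t) * t)) at_top"
    using eventually_gt_at_top[of 0] by eventually_elim (use texp_integral_le(1) assms in auto)
  ultimately show ?thesis by (rule Lim_transform_eventually)
qed

lemma bound_cont:
  fixes \<phi> :: "real \<Rightarrow> real"
  assumes "continuous_on {c..d} \<phi>"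
  obtains B where "B \<ge> 0" "\<And>t. t \<in> {c..d} \<Longrightarrow> \<bar>\<phi> t\<bar> \<le> B"
proof (cases "c \<le> d")
  case True
  have "continuous_on {c..d} (\<lambda>t. \<bar>\<phi> t\<bar>)" using assms by (intro continuous_intros)
  then obtain p where "p \<in> {c..d}" "\<forall>t\<in>{c..d}. \<bar>\<phi> t\<bar> \<le> \<bar>\<phi> p\<bar>"
    using continuous_attains_sup[of "{c..d}" "\<lambda>t. \<bar>\<phi> t\<bar>"] True by auto
  then show ?thesis using that[of "\<bar>\<phi> p\<bar>"] by auto
next
  case False
  then show ?thesis using that[of 0] by auto
qed

lemma tail_tendsto:
  fixes \<phi> :: "real \<Rightarrow> real"
  assumes cont: "continuous_on {0..\<delta>} \<phi>" and d': "0 < \<delta>'" "\<delta>' \<le> \<delta>"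
  shows "((\<lambda>s. s\<^sup>2 * integral {0..\<delta>} (\<lambda>t. exp (- s * t) * \<phi> t)
              - s\<^sup>2 * integral {0..\<delta>'} (\<lambda>t. exp (- s * t) * \<phi> t)) \<longlongrightarrow> 0) at_top"
proof -
  obtain B where B: "B \<ge> 0" "\<And>t. t \<in> {0..\<delta>} \<Longrightarrow> \<bar>\<phi> t\<bar> \<le> B"
    using bound_cont[OF cont] by blast
  have int: "(\<lambda>t. exp (- s * t) * \<phi> t) integrable_on {0..\<delta>}" for s
    by (intro integrable_continuous_real continuous_intros cont)
  have eq: "s\<^sup>2 * integral {0..\<delta>} (\<lambda>t. exp (- s * t) * \<phi> t)
              - s\<^sup>2 * integral {0..\<delta>'} (\<lambda>t. exp (- s * t) * \<phi> t)
           = s\<^sup>2 * integral {\<delta>'..\<delta>} (\<lambda>t. exp (- s * t) * \<phi> t)" for s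
    using Henstock_Kurzweil_Integration.integral_combine[OF _ _ int[of s], of "\<delta>'"] d' by (simp add: right_diff_distrib[symmetric] eq_diff_eq)
  have bnd: "\<bar>s\<^sup>2 * integral {\<delta>'..\<delta>} (\<lambda>t. exp (- s * t) * \<phi> t)\<bar> \<le> s\<^sup>2 * exp (- s * \<delta>') * (B * (\<delta> - \<delta>'))"
    if s: "s \<ge> 0" for s
  proof -
    have int2: "(\<lambda>t. exp (- s * t) * \<phi> t) integrable_on {\<delta>'..\<delta>}"
      by (rule integrable_on_subinterval[OF int]) (use d' in auto)
    have pt: "\<bar>exp (- s * t) * \<phi> t\<bar> \<le> exp (- s * \<delta>') * B" if t: "t \<in> {\<delta>'..\<delta>}" for t
    proof -
      have "exp (- s * t) \<le> exp (- s * \<delta>')" using t s by (simp add: mult_left_mono)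
      moreover have "\<bar>\<phi> t\<bar> \<le> B" using B(2)[of t] t d' by auto
      ultimately show ?thesis by (simp add: abs_mult mult_mono)
    qed
    have "integral {\<delta>'..\<delta>} (\<lambda>t. exp (- s * t) * \<phi> t) \<le> integral {\<delta>'..\<delta>} (\<lambda>t. exp (- s * \<delta>') * B)"
      by (rule integral_le[OF int2]) (use pt in \<open>auto simp: abs_le_iff\<close>)
    moreover have "- integral {\<delta>'..\<delta>} (\<lambda>t. exp (- s * \<delta>') * B) \<le> integral {\<delta>'..\<delta>} (\<lambda>t. exp (- s * t) * \<phi> t)"
      unfolding integral_neg[symmetric]
      by (rule integral_le[OF _ int2]) (use pt in \<open>force simp: abs_le_iff\<close>)+
    ultimately have "\<bar>integral {\<delta>'..\<delta>} (\<lambda>t. exp (- s * t) * \<phi> t)\<bar> \<le> exp (- s * \<delta>') * B * (\<delta> - \<delta>')"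
      using d' by (simp add: abs_le_iff mult_ac)
    then have "s\<^sup>2 * \<bar>integral {\<delta>'..\<delta>} (\<lambda>t. exp (- s * t) * \<phi> t)\<bar> \<le> s\<^sup>2 * (exp (- s * \<delta>') * B * (\<delta> - \<delta>'))"
      by (rule mult_left_mono) simp
    then show ?thesis by (simp add: abs_mult mult_ac)
  qed
  have "((\<lambda>s. s\<^sup>2 * exp (- s * \<delta>')) \<longlongrightarrow> 0) at_top" using d' by real_asymp
  then have lim: "((\<lambda>s. s\<^sup>2 * exp (- s * \<delta>') * (B * (\<delta> - \<delta>'))) \<longlongrightarrow> 0) at_top"
    by (rule tendsto_mult_left_zero)
  show ?thesis unfolding eq
    by (rule Lim_null_comparison[OF _ lim]) (use eventually_ge_at_top[of 0] in \<open>eventually_elim, use bnd in simp\<close>)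
qed

lemma small_tendsto:
  fixes \<phi> :: "real \<Rightarrow> real"
  assumes cont: "continuous_on {0..\<delta>} \<phi>" and d: "0 < \<delta>"
    and small: "\<forall>\<epsilon>>0. \<exists>\<eta>>0. \<forall>t. 0 \<le> t \<and> t \<le> \<delta> \<and> t < \<eta> \<longrightarrow> \<bar>\<phi> t\<bar> \<le> \<epsilon> * t"
  shows "((\<lambda>s. s\<^sup>2 * integral {0..\<delta>} (\<lambda>t. exp (- s * t) * \<phi> t)) \<longlongrightarrow> 0) at_top"
proof (rule tendstoI)
  fix e :: real assume e: "e > 0"
  obtain \<eta> where eta: "\<eta> > 0" "\<forall>t. 0 \<le> t \<and> t \<le> \<delta> \<and> t < \<eta> \<longrightarrow> \<bar>\<phi> t\<bar> \<le> e / 2 * t"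
    using small e by (meson half_gt_zero)
  define \<eta>' where "\<eta>' = min (\<eta> / 2) \<delta>"
  have eta': "0 < \<eta>'" "\<eta>' \<le> \<delta>" "\<eta>' < \<eta>" using eta d unfolding \<eta>'_def by auto
  have ev1: "eventually (\<lambda>s. dist (s\<^sup>2 * integral {0..\<delta>} (\<lambda>t. exp (- s * t) * \<phi> t)
              - s\<^sup>2 * integral {0..\<eta>'} (\<lambda>t. exp (- s * t) * \<phi> t)) 0 < e / 2) at_top"
    using tendstoD[OF tail_tendsto[OF cont eta'(1,2)], of "e/2"] e by simp
  have bnd: "\<bar>s\<^sup>2 * integral {0..\<eta>'} (\<lambda>t. exp (- s * t) * \<phi> t)\<bar> \<le> e / 2" if s: "s > 0" for s
  proof -
    have int: "(\<lambda>t. exp (- s * t) * \<phi> t) integrable_on {0..\<eta>'}"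
      by (intro integrable_continuous_real continuous_intros continuous_on_subset[OF cont]) (use eta' in auto)
    have int2: "(\<lambda>t. e / 2 * (exp (- s * t) * t)) integrable_on {0..\<eta>'}"
      by (intro integrable_continuous_real continuous_intros)
    have int3: "(\<lambda>t. - (e / 2 * (exp (- s * t) * t))) integrable_on {0..\<eta>'}"
      by (intro integrable_continuous_real continuous_intros)
    have pt: "\<bar>exp (- s * t) * \<phi> t\<bar> \<le> e / 2 * (exp (- s * t) * t)" if t: "t \<in> {0..\<eta>'}" for t
    proof -
      have "\<bar>\<phi> t\<bar> \<le> e / 2 * t" using eta(2) t eta' by auto
      then have "exp (- s * t) * \<bar>\<phi> t\<bar> \<le> exp (- s * t) * (e / 2 * t)" by (rule mult_left_mono) simp
      then show ?thesis by (simp add: abs_mult mult_ac)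
    qed
    have "integral {0..\<eta>'} (\<lambda>t. exp (- s * t) * \<phi> t) \<le> integral {0..\<eta>'} (\<lambda>t. e / 2 * (exp (- s * t) * t))"
      by (rule integral_le[OF int int2]) (smt (verit) pt)
    moreover have "integral {0..\<eta>'} (\<lambda>t. - (e / 2 * (exp (- s * t) * t))) \<le> integral {0..\<eta>'} (\<lambda>t. exp (- s * t) * \<phi> t)"
      by (rule integral_le[OF int3 int]) (smt (verit) pt)
    ultimately have "\<bar>integral {0..\<eta>'} (\<lambda>t. exp (- s * t) * \<phi> t)\<bar> \<le> e / 2 * integral {0..\<eta>'} (\<lambda>t. exp (- s * t) * t)"
      by (simp add: abs_le_iff integral_neg)
    then have "s\<^sup>2 * \<bar>integral {0..\<eta>'} (\<lambda>t. exp (- s * t) * \<phi> t)\<bar> \<le> e / 2 * (s\<^sup>2 * integral {0..\<eta>'} (\<lambda>t. exp (- s * t) * t))"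
      by (metis (no_types, lifting) mult.left_commute mult_left_mono zero_le_power2)
    also have "\<dots> \<le> e / 2 * 1"
      by (rule mult_left_mono) (use texp_integral_le(2)[OF s, of \<eta>'] eta' e in auto)
    finally show ?thesis by (simp add: abs_mult)
  qed
  show "eventually (\<lambda>s. dist (s\<^sup>2 * integral {0..\<delta>} (\<lambda>t. exp (- s * t) * \<phi> t)) 0 < e) at_top"
    using ev1 eventually_gt_at_top[of 0]
  proof eventually_elim
    case (elim s)
    then show ?case using bnd[of s] unfolding dist_real_def by linarith
  qed
qed

definition lbnd :: "(real \<Rightarrow> real) \<Rightarrow> real \<Rightarrow> bool" where
  "lbnd X c \<longleftrightarrow> (\<forall>y<c. eventually (\<lambda>s. y < X s) at_top)"

definition ubnd :: "(real \<Rightarrow> real) \<Rightarrow> real \<Rightarrow> bool" where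
  "ubnd X c \<longleftrightarrow> (\<forall>y>c. eventually (\<lambda>s. X s < y) at_top)"

lemma Liminf_ge_iff_lbnd: "ereal c \<le> Liminf at_top (\<lambda>s. ereal (X s)) \<longleftrightarrow> lbnd X c"
  unfolding le_Liminf_iff lbnd_def
proof safe
  fix y assume "\<forall>y<ereal c. \<forall>\<^sub>F x in at_top. y < ereal (X x)" "y < c"
  then show "\<forall>\<^sub>F s in at_top. y < X s" by (auto elim!: allE[of _ "ereal y"])
next
  fix y assume a: "\<forall>y<c. \<forall>\<^sub>F s in at_top. y < X s" and y: "y < ereal c"
  show "\<forall>\<^sub>F x in at_top. y < ereal (X x)"
  proof (cases y)
    case (real r)
    then show ?thesis using a y by auto
  qed (use y in auto)
qed

lemma Limsup_le_iff_ubnd: "Limsup at_top (\<lambda>s. ereal (X s)) \<le> ereal c \<longleftrightarrow> ubnd X c"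
  unfolding Limsup_le_iff ubnd_def
proof safe
  fix y assume "\<forall>y>ereal c. \<forall>\<^sub>F x in at_top. ereal (X x) < y" "y > c"
  then show "\<forall>\<^sub>F s in at_top. X s < y" by (auto elim!: allE[of _ "ereal y"])
next
  fix y assume a: "\<forall>y>c. \<forall>\<^sub>F s in at_top. X s < y" and y: "y > ereal c"
  show "\<forall>\<^sub>F x in at_top. ereal (X x) < y"
  proof (cases y)
    case (real r)
    then show ?thesis using a y by auto
  qed (use y in auto)
qed

lemma ubnd_neg: "ubnd X c \<longleftrightarrow> lbnd (\<lambda>s. - X s) (- c)"
  unfolding ubnd_def lbnd_def
proof safe
  fix y assume "\<forall>y>c. \<forall>\<^sub>F s in at_top. X s < y" "y < - c"
  then have "\<forall>\<^sub>F s in at_top. X s < - y" by auto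
  then show "\<forall>\<^sub>F s in at_top. y < - X s" by eventually_elim linarith
next
  fix y assume "\<forall>y< - c. \<forall>\<^sub>F s in at_top. y < - X s" "c < y"
  then have "\<forall>\<^sub>F s in at_top. - y < - X s" by (auto elim!: allE[of _ "- y"])
  then show "\<forall>\<^sub>F s in at_top. X s < y" by eventually_elim linarith
qed

lemma lbnd_scale:
  assumes X: "lbnd X c" and k: "k \<ge> 0" and lim: "((\<lambda>s. Y s - k * X s) \<longlongrightarrow> 0) at_top"
  shows "lbnd Y (k * c)"
  unfolding lbnd_def
proof safe
  fix y assume y: "y < k * c"
  show "\<forall>\<^sub>F s in at_top. y < Y s"
  proof (cases "k = 0")
    case True
    then have "y < 0" using y by simp
    then have "\<forall>\<^sub>F s in at_top. dist (Y s - k * X s) 0 < - y" using tendstoD[OF lim, of "-y"] by simp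
    then show ?thesis by eventually_elim (use True in \<open>auto simp: dist_real_def\<close>)
  next
    case False
    then have kp: "k > 0" using k by simp
    define y1 where "y1 = (y + k * c) / 2"
    have "y1 / k < c" using y kp unfolding y1_def by (simp add: field_simps)
    then have ev1: "\<forall>\<^sub>F s in at_top. y1 / k < X s" using X unfolding lbnd_def by blast
    have "y1 - y > 0" using y unfolding y1_def by simp
    then have ev2: "\<forall>\<^sub>F s in at_top. dist (Y s - k * X s) 0 < y1 - y" using tendstoD[OF lim] by blast
    show ?thesis using ev1 ev2
    proof eventually_elim
      case (elim s)
      then have "y1 < k * X s" using kp by (simp add: field_simps)
      then show ?case using elim(2) by (simp add: dist_real_def)
    qed
  qed
qed

lemma lbnd_shift: "lbnd X c \<Longrightarrow> ((\<lambda>s. Y s - X s) \<longlongrightarrow> 0) at_top \<Longrightarrow> lbnd Y c"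
  using lbnd_scale[of X c 1 Y] by simp

lemma ubnd_shift: "ubnd X c \<Longrightarrow> ((\<lambda>s. Y s - X s) \<longlongrightarrow> 0) at_top \<Longrightarrow> ubnd Y c"
  unfolding ubnd_neg
  by (erule lbnd_shift) (use tendsto_minus[of "\<lambda>s. Y s - X s" 0 at_top] in simp)

lemma lbnd_diff:
  assumes "lbnd X c" "ubnd Y c"
  shows "lbnd (\<lambda>s. X s - Y s) 0"
  unfolding lbnd_def
proof safe
  fix y :: real assume y: "y < 0"
  have "\<forall>\<^sub>F s in at_top. c + y / 2 < X s" using assms(1) y unfolding lbnd_def by auto
  moreover have "\<forall>\<^sub>F s in at_top. Y s < c - y / 2" using assms(2) y unfolding ubnd_def by auto
  ultimately show "\<forall>\<^sub>F s in at_top. y < X s - Y s" by eventually_elim simp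
qed

lemma cont_shift_r:
  fixes U :: "real \<Rightarrow> real"
  assumes "continuous_on {x..x+\<delta>} U"
  shows "continuous_on {0..\<delta>} (\<lambda>t. U (x + t) - U x)"
proof -
  have "continuous_on {0..\<delta>} (\<lambda>t. U (x + t))"
    by (rule continuous_on_compose2[OF assms, of _ "\<lambda>t. x + t"]) (auto intro!: continuous_intros)
  then show ?thesis by (intro continuous_intros)
qed

lemma cont_shift_l:
  fixes U :: "real \<Rightarrow> real"
  assumes "continuous_on {x-\<delta>..x} U"
  shows "continuous_on {0..\<delta>} (\<lambda>t. U (x - t) - U x)"
proof -
  have "continuous_on {0..\<delta>} (\<lambda>t. U (x - t))"
    by (rule continuous_on_compose2[OF assms, of _ "\<lambda>t. x - t"]) (auto intro!: continuous_intros)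
  then show ?thesis by (intro continuous_intros)
qed

lemma shrink_r:
  assumes "continuous_on {x..x+\<delta>} U" "0 < \<delta>'" "\<delta>' \<le> \<delta>"
  shows "((\<lambda>s. LDr1 U x \<delta> s - LDr1 U x \<delta>' s) \<longlongrightarrow> 0) at_top"
  unfolding LDr1_def using tail_tendsto[OF cont_shift_r[OF assms(1)] assms(2,3)] .

lemma shrink_l:
  assumes "continuous_on {x-\<delta>..x} U" "0 < \<delta>'" "\<delta>' \<le> \<delta>"
  shows "((\<lambda>s. LDl1 U x \<delta> s - LDl1 U x \<delta>' s) \<longlongrightarrow> 0) at_top"
  unfolding LDl1_def using tendsto_minus[OF tail_tendsto[OF cont_shift_l[OF assms(1)] assms(2,3)]]
  by (simp add: algebra_simps)

lemma LDr1_neg: "LDr1 (\<lambda>y. - U y) x \<delta> s = - LDr1 U x \<delta> s"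
proof -
  have "(\<lambda>t. exp (- s * t) * (- U (x + t) - - U x)) = (\<lambda>t. - (exp (- s * t) * (U (x + t) - U x)))"
    by (rule ext) (simp add: algebra_simps)
  then show ?thesis unfolding LDr1_def by (simp add: integral_neg)
qed

lemma LDl1_neg: "LDl1 (\<lambda>y. - U y) x \<delta> s = - LDl1 U x \<delta> s"
proof -
  have "(\<lambda>t. exp (- s * t) * (- U (x - t) - - U x)) = (\<lambda>t. - (exp (- s * t) * (U (x - t) - U x)))"
    by (rule ext) (simp add: algebra_simps)
  then show ?thesis unfolding LDl1_def by (simp add: integral_neg)
qed

lemma LDr1_diff:
  assumes "continuous_on {x..x+\<delta>} U" "continuous_on {x..x+\<delta>} V"
  shows "LDr1 (\<lambda>y. U y - V y) x \<delta> s = LDr1 U x \<delta> s - LDr1 V x \<delta> s"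
proof -
  have i1: "(\<lambda>t. exp (- s * t) * (U (x + t) - U x)) integrable_on {0..\<delta>}"
    by (intro integrable_continuous_real continuous_intros cont_shift_r assms)
  have i2: "(\<lambda>t. exp (- s * t) * (V (x + t) - V x)) integrable_on {0..\<delta>}"
    by (intro integrable_continuous_real continuous_intros cont_shift_r assms)
  have "(\<lambda>t. exp (- s * t) * (U (x + t) - V (x + t) - (U x - V x))) =
     (\<lambda>t. exp (- s * t) * (U (x + t) - U x) - exp (- s * t) * (V (x + t) - V x))"
    by (rule ext) (simp add: algebra_simps)
  then have "integral {0..\<delta>} (\<lambda>t. exp (- s * t) * (U (x + t) - V (x + t) - (U x - V x))) =
     integral {0..\<delta>} (\<lambda>t. exp (- s * t) * (U (x + t) - U x)) - integral {0..\<delta>} (\<lambda>t. exp (- s * t) * (V (x + t) - V x))"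
    using integral_diff[OF i1 i2] by simp
  then show ?thesis unfolding LDr1_def
    by (simp only: right_diff_distrib)
qed

lemma LDl1_diff:
  assumes "continuous_on {x-\<delta>..x} U" "continuous_on {x-\<delta>..x} V"
  shows "LDl1 (\<lambda>y. U y - V y) x \<delta> s = LDl1 U x \<delta> s - LDl1 V x \<delta> s"
proof -
  have i1: "(\<lambda>t. exp (- s * t) * (U (x - t) - U x)) integrable_on {0..\<delta>}"
    by (intro integrable_continuous_real continuous_intros cont_shift_l assms)
  have i2: "(\<lambda>t. exp (- s * t) * (V (x - t) - V x)) integrable_on {0..\<delta>}"
    by (intro integrable_continuous_real continuous_intros cont_shift_l assms)
  have "(\<lambda>t. exp (- s * t) * (U (x - t) - V (x - t) - (U x - V x))) =
     (\<lambda>t. exp (- s * t) * (U (x - t) - U x) - exp (- s * t) * (V (x - t) - V x))"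
    by (rule ext) (simp add: algebra_simps)
  then have "integral {0..\<delta>} (\<lambda>t. exp (- s * t) * (U (x - t) - V (x - t) - (U x - V x))) =
     integral {0..\<delta>} (\<lambda>t. exp (- s * t) * (U (x - t) - U x)) - integral {0..\<delta>} (\<lambda>t. exp (- s * t) * (V (x - t) - V x))"
    using integral_diff[OF i1 i2] by simp
  then show ?thesis unfolding LDl1_def
    by (simp only: right_diff_distrib)
qed

definition majpt :: "(real \<Rightarrow> real) \<Rightarrow> real \<Rightarrow> real \<Rightarrow> (real \<Rightarrow> real) \<Rightarrow> real \<Rightarrow> real \<Rightarrow> bool" where
  "majpt h c d U x \<delta> \<longleftrightarrow> admissible_delta c d x \<delta> \<and> (x < d \<longrightarrow> lbnd (LDr1 U x \<delta>) (h x))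
      \<and> (c < x \<longrightarrow> lbnd (LDl1 U x \<delta>) (h x))"

definition minpt :: "(real \<Rightarrow> real) \<Rightarrow> real \<Rightarrow> real \<Rightarrow> (real \<Rightarrow> real) \<Rightarrow> real \<Rightarrow> real \<Rightarrow> bool" where
  "minpt h c d U x \<delta> \<longleftrightarrow> admissible_delta c d x \<delta> \<and> (x < d \<longrightarrow> ubnd (LDr1 U x \<delta>) (h x))
      \<and> (c < x \<longrightarrow> ubnd (LDl1 U x \<delta>) (h x))"

lemma major_iff:
  "laplace_major h c d U \<longleftrightarrow> continuous_on {c..d} U \<and> (\<forall>x\<in>{c..d}. \<exists>\<delta>. majpt h c d U x \<delta>)"
proof -
  have "(ereal (h x) \<le> lowLD U c d \<delta> x \<and> lowLD U c d \<delta> x > -\<infinity>) \<longleftrightarrow>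
        (x < d \<longrightarrow> lbnd (LDr1 U x \<delta>) (h x)) \<and> (c < x \<longrightarrow> lbnd (LDl1 U x \<delta>) (h x))" for x \<delta>
  proof -
    have "ereal (h x) \<le> lowLD U c d \<delta> x \<longleftrightarrow>
        (x < d \<longrightarrow> lbnd (LDr1 U x \<delta>) (h x)) \<and> (c < x \<longrightarrow> lbnd (LDl1 U x \<delta>) (h x))"
      unfolding lowLD_def Liminf_ge_iff_lbnd[symmetric] LDr1_def LDl1_def by auto
    moreover have "ereal (h x) \<le> lowLD U c d \<delta> x \<Longrightarrow> lowLD U c d \<delta> x > -\<infinity>"
      by (metis MInfty_neq_ereal(1) ereal_infty_less_eq(2) not_le)
    ultimately show ?thesis by blast
  qed
  then show ?thesis unfolding laplace_major_def majpt_def by blast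
qed

lemma minor_iff:
  "laplace_minor h c d U \<longleftrightarrow> continuous_on {c..d} U \<and> (\<forall>x\<in>{c..d}. \<exists>\<delta>. minpt h c d U x \<delta>)"
proof -
  have "(upLD U c d \<delta> x \<le> ereal (h x) \<and> upLD U c d \<delta> x < \<infinity>) \<longleftrightarrow>
        (x < d \<longrightarrow> ubnd (LDr1 U x \<delta>) (h x)) \<and> (c < x \<longrightarrow> ubnd (LDl1 U x \<delta>) (h x))" for x \<delta>
  proof -
    have "upLD U c d \<delta> x \<le> ereal (h x) \<longleftrightarrow>
        (x < d \<longrightarrow> ubnd (LDr1 U x \<delta>) (h x)) \<and> (c < x \<longrightarrow> ubnd (LDl1 U x \<delta>) (h x))"
      unfolding upLD_def Limsup_le_iff_ubnd[symmetric] LDr1_def LDl1_def by auto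
    moreover have "upLD U c d \<delta> x \<le> ereal (h x) \<Longrightarrow> upLD U c d \<delta> x < \<infinity>"
      by (metis PInfty_neq_ereal(1) ereal_infty_less_eq(1) not_le)
    ultimately show ?thesis by blast
  qed
  then show ?thesis unfolding laplace_minor_def minpt_def by blast
qed

lemma minpt_neg: "minpt h c d V x \<delta> \<longleftrightarrow> majpt (\<lambda>x. - h x) c d (\<lambda>y. - V y) x \<delta>"
  unfolding minpt_def majpt_def ubnd_neg LDr1_neg LDl1_neg ..

lemma minor_neg: "laplace_minor h c d V \<longleftrightarrow> laplace_major (\<lambda>x. - h x) c d (\<lambda>y. - V y)"
proof -
  have "continuous_on {c..d} V \<longleftrightarrow> continuous_on {c..d} (\<lambda>y. - V y)"
    using continuous_on_minus[of "{c..d}" V] continuous_on_minus[of "{c..d}" "\<lambda>y. - V y"] by auto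
  then show ?thesis unfolding minor_iff major_iff minpt_neg by blast
qed

lemma shrink_lbnd_r:
  assumes "lbnd (LDr1 U x \<delta>) c" "continuous_on {x..x+\<delta>} U" "0 < \<delta>'" "\<delta>' \<le> \<delta>"
  shows "lbnd (LDr1 U x \<delta>') c"
  using lbnd_shift[OF assms(1)] tendsto_minus[OF shrink_r[OF assms(2-4)]] by simp

lemma shrink_lbnd_l:
  assumes "lbnd (LDl1 U x \<delta>) c" "continuous_on {x-\<delta>..x} U" "0 < \<delta>'" "\<delta>' \<le> \<delta>"
  shows "lbnd (LDl1 U x \<delta>') c"
  using lbnd_shift[OF assms(1)] tendsto_minus[OF shrink_l[OF assms(2-4)]] by simp

lemma shrink_ubnd_r:
  assumes "ubnd (LDr1 U x \<delta>) c" "continuous_on {x..x+\<delta>} U" "0 < \<delta>'" "\<delta>' \<le> \<delta>"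
  shows "ubnd (LDr1 U x \<delta>') c"
  using ubnd_shift[OF assms(1)] tendsto_minus[OF shrink_r[OF assms(2-4)]] by simp

lemma major_restrict:
  assumes maj: "laplace_major h c d U" and le: "c \<le> c'" "c' \<le> d'" "d' \<le> d"
  shows "laplace_major h c' d' U"
proof -
  have cont: "continuous_on {c..d} U" using maj major_iff by blast
  have "majpt h c' d' U x (min \<delta> (min (if x < d' then d' - x else \<delta>) (if c' < x then x - c' else \<delta>)))"
    if x: "x \<in> {c'..d'}" and mp: "majpt h c d U x \<delta>" for x \<delta>
  proof -
    define \<delta>' where "\<delta>' = min \<delta> (min (if x < d' then d' - x else \<delta>) (if c' < x then x - c' else \<delta>))"
    have adm: "admissible_delta c d x \<delta>" using mp unfolding majpt_def by blast
    then have dpos: "\<delta> > 0" unfolding admissible_delta_def by blast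
    have d': "0 < \<delta>'" "\<delta>' \<le> \<delta>" using dpos unfolding \<delta>'_def by auto
    have adm': "admissible_delta c' d' x \<delta>'" unfolding admissible_delta_def using d' unfolding \<delta>'_def by auto
    have r: "lbnd (LDr1 U x \<delta>') (h x)" if "x < d'"
    proof -
      have "x < d" using that le by simp
      then have "lbnd (LDr1 U x \<delta>) (h x)" "x + \<delta> \<le> d" using mp adm unfolding majpt_def admissible_delta_def by auto
      moreover have "continuous_on {x..x+\<delta>} U"
        by (rule continuous_on_subset[OF cont]) (use x le \<open>x + \<delta> \<le> d\<close> in auto)
      ultimately show ?thesis using shrink_lbnd_r d' by blast
    qed
    have l: "lbnd (LDl1 U x \<delta>') (h x)" if "c' < x"
    proof -
      have "c < x" using that le by simp
      then have "lbnd (LDl1 U x \<delta>) (h x)" "c \<le> x - \<delta>" using mp adm unfolding majpt_def admissible_delta_def by auto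
      moreover have "continuous_on {x-\<delta>..x} U"
        by (rule continuous_on_subset[OF cont]) (use x le \<open>c \<le> x - \<delta>\<close> in auto)
      ultimately show ?thesis using shrink_lbnd_l d' by blast
    qed
    show ?thesis using adm' r l unfolding majpt_def \<delta>'_def by blast
  qed
  moreover have "continuous_on {c'..d'} U" by (rule continuous_on_subset[OF cont]) (use le in auto)
  ultimately show ?thesis using maj le unfolding major_iff by (meson atLeastAtMost_iff order_trans)
qed

lemma minor_restrict:
  assumes "laplace_minor h c d U" "c \<le> c'" "c' \<le> d'" "d' \<le> d"
  shows "laplace_minor h c' d' U"
  using assms major_restrict unfolding minor_neg by blast

lemma mono_right:
  fixes W :: "real \<Rightarrow> real"
  assumes cont: "continuous_on {c..d} W" and cd: "c \<le> d"
    and H: "\<forall>x\<in>{c..<d}. \<exists>\<delta>>0. x + \<delta> \<le> d \<and> lbnd (LDr1 W x \<delta>) 0"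
  shows "W c \<le> W d"
proof (rule ccontr)
  assume "\<not> W c \<le> W d"
  then have lt: "W d < W c" by simp
  then have cd': "c < d" using cd by (cases "c = d") auto
  define \<epsilon> where "\<epsilon> = (W c - W d) / (2 * (d - c))"
  have eps: "\<epsilon> > 0" using lt cd' unfolding \<epsilon>_def by simp
  define V where "V t = W t + \<epsilon> * t" for t
  have contV: "continuous_on {c..d} V" unfolding V_def by (intro continuous_intros cont)
  obtain p where p: "p \<in> {c..d}" "\<forall>y\<in>{c..d}. V y \<le> V p"
    using continuous_attains_sup[OF compact_Icc _ contV] cd by auto
  have "\<epsilon> * (d - c) = (W c - W d) / 2" unfolding \<epsilon>_def using cd' by (simp add: field_simps)
  then have "V d < V c" unfolding V_def using lt by (simp add: algebra_simps)
  moreover have "V c \<le> V p" using p cd by auto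
  ultimately have "p \<noteq> d" by auto
  then have "p \<in> {c..<d}" using p by auto
  then obtain \<delta> where d: "\<delta> > 0" "p + \<delta> \<le> d" "lbnd (LDr1 W p \<delta>) 0" using H by blast
  have contW: "continuous_on {p..p+\<delta>} W" by (rule continuous_on_subset[OF cont]) (use p d in auto)
  have i1: "(\<lambda>t. exp (- s * t) * (W (p + t) - W p)) integrable_on {0..\<delta>}" for s
    by (intro integrable_continuous_real continuous_intros cont_shift_r contW)
  have i2: "(\<lambda>t. exp (- s * t) * t) integrable_on {0..\<delta>}" for s
    by (intro integrable_continuous_real continuous_intros)
  have eqV: "LDr1 V p \<delta> s = LDr1 W p \<delta> s + \<epsilon> * (s\<^sup>2 * integral {0..\<delta>} (\<lambda>t. exp (- s * t) * t))" for s
  proof -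
    have "(\<lambda>t. exp (- s * t) * (V (p + t) - V p)) = (\<lambda>t. exp (- s * t) * (W (p + t) - W p) + \<epsilon> * (exp (- s * t) * t))"
      unfolding V_def by (rule ext) (simp add: algebra_simps)
    then have "integral {0..\<delta>} (\<lambda>t. exp (- s * t) * (V (p + t) - V p)) =
       integral {0..\<delta>} (\<lambda>t. exp (- s * t) * (W (p + t) - W p)) + \<epsilon> * integral {0..\<delta>} (\<lambda>t. exp (- s * t) * t)"
      using integral_add[OF i1 integrable_on_cmult_left[OF i2, of \<epsilon>]] by simp
    then show ?thesis unfolding LDr1_def by (simp add: algebra_simps)
  qed
  have nonpos: "LDr1 V p \<delta> s \<le> 0" for s
  proof -
    have iV: "(\<lambda>t. exp (- s * t) * (V (p + t) - V p)) integrable_on {0..\<delta>}"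
      by (intro integrable_continuous_real continuous_intros cont_shift_r continuous_on_subset[OF contV]) (use p d in auto)
    have "integral {0..\<delta>} (\<lambda>t. exp (- s * t) * (V (p + t) - V p)) \<le> integral {0..\<delta>} (\<lambda>t. 0)"
    proof (rule integral_le[OF iV])
      fix t assume t: "t \<in> {0..\<delta>}"
      then have "V (p + t) \<le> V p" using p d by auto
      then show "exp (- s * t) * (V (p + t) - V p) \<le> 0" by (simp add: mult_nonneg_nonpos)
    qed (rule integrable_0)
    then show ?thesis unfolding LDr1_def by (simp add: mult_nonneg_nonpos)
  qed
  have ev1: "\<forall>\<^sub>F s in at_top. - \<epsilon> / 2 < LDr1 W p \<delta> s" using d(3) eps unfolding lbnd_def by auto
  have ev2: "\<forall>\<^sub>F s in at_top. dist (s\<^sup>2 * integral {0..\<delta>} (\<lambda>t. exp (- s * t) * t)) 1 < 1 / 2"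
    using tendstoD[OF texp_tendsto[OF d(1)], of "1/2"] by simp
  have "\<forall>\<^sub>F s in at_top. LDr1 V p \<delta> s > 0" using ev1 ev2
  proof eventually_elim
    case (elim s)
    then have "s\<^sup>2 * integral {0..\<delta>} (\<lambda>t. exp (- s * t) * t) > 1 / 2" unfolding dist_real_def by linarith
    then have "\<epsilon> * (s\<^sup>2 * integral {0..\<delta>} (\<lambda>t. exp (- s * t) * t)) > \<epsilon> * (1 / 2)"
      using eps by (intro mult_strict_left_mono) auto
    then show ?case using eqV[of s] elim(1) by simp
  qed
  then obtain N where "\<forall>s\<ge>N. LDr1 V p \<delta> s > 0" unfolding eventually_at_top_linorder by blast
  then show False using nonpos[of N] by auto
qed

lemma compare:
  assumes W: "laplace_major h c d W" and Z: "laplace_minor h c d Z" and cd: "c \<le> d"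
  shows "Z d - Z c \<le> W d - W c"
proof -
  have cW: "continuous_on {c..d} W" using W major_iff by blast
  have cZ: "continuous_on {c..d} Z" using Z minor_iff by blast
  have "(\<lambda>y. W y - Z y) c \<le> (\<lambda>y. W y - Z y) d"
  proof (rule mono_right[OF _ cd])
    show "continuous_on {c..d} (\<lambda>y. W y - Z y)" by (intro continuous_intros cW cZ)
    show "\<forall>x\<in>{c..<d}. \<exists>\<delta>>0. x + \<delta> \<le> d \<and> lbnd (LDr1 (\<lambda>y. W y - Z y) x \<delta>) 0"
    proof
      fix x assume x: "x \<in> {c..<d}"
      have xx: "x \<in> {c..d}" using x by auto
      obtain \<delta>1 where d1: "majpt h c d W x \<delta>1" using W xx unfolding major_iff by blast
      obtain \<delta>2 where d2: "minpt h c d Z x \<delta>2" using Z xx unfolding minor_iff by blast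
      have p1: "\<delta>1 > 0" "x + \<delta>1 \<le> d" "lbnd (LDr1 W x \<delta>1) (h x)"
        using d1 x unfolding majpt_def admissible_delta_def by auto
      have p2: "\<delta>2 > 0" "x + \<delta>2 \<le> d" "ubnd (LDr1 Z x \<delta>2) (h x)"
        using d2 x unfolding minpt_def admissible_delta_def by auto
      define \<delta> where "\<delta> = min \<delta>1 \<delta>2"
      have cW1: "continuous_on {x..x+\<delta>1} W" by (rule continuous_on_subset[OF cW]) (use x p1 in auto)
      have cZ2: "continuous_on {x..x+\<delta>2} Z" by (rule continuous_on_subset[OF cZ]) (use x p2 in auto)
      have cW': "continuous_on {x..x+\<delta>} W" by (rule continuous_on_subset[OF cW]) (use x p1 in \<open>auto simp: \<delta>_def\<close>)
      have cZ': "continuous_on {x..x+\<delta>} Z" by (rule continuous_on_subset[OF cZ]) (use x p2 in \<open>auto simp: \<delta>_def\<close>)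
      have "lbnd (LDr1 W x \<delta>) (h x)" by (rule shrink_lbnd_r[OF p1(3) cW1]) (use p1 p2 in \<open>auto simp: \<delta>_def\<close>)
      moreover have "ubnd (LDr1 Z x \<delta>) (h x)" by (rule shrink_ubnd_r[OF p2(3) cZ2]) (use p1 p2 in \<open>auto simp: \<delta>_def\<close>)
      ultimately have "lbnd (\<lambda>s. LDr1 W x \<delta> s - LDr1 Z x \<delta> s) 0" by (rule lbnd_diff)
      then have "lbnd (LDr1 (\<lambda>y. W y - Z y) x \<delta>) 0"
        using LDr1_diff[OF cW' cZ'] by presburger
      moreover have "\<delta> > 0" "x + \<delta> \<le> d" using p1 p2 unfolding \<delta>_def by auto
      ultimately show "\<exists>\<delta>>0. x + \<delta> \<le> d \<and> lbnd (LDr1 (\<lambda>y. W y - Z y) x \<delta>) 0" by blast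
    qed
  qed
  then show ?thesis by simp
qed

lemma LDr1_lin:
  assumes "continuous_on {x..x+\<delta>} U" "continuous_on {x..x+\<delta>} V"
  shows "LDr1 U x \<delta> s - k * LDr1 V x \<delta> s =
    s\<^sup>2 * integral {0..\<delta>} (\<lambda>\<tau>. exp (- s * \<tau>) * (U (x + \<tau>) - U x - k * (V (x + \<tau>) - V x)))"
proof -
  have i1: "(\<lambda>t. exp (- s * t) * (U (x + t) - U x)) integrable_on {0..\<delta>}"
    by (intro integrable_continuous_real continuous_intros cont_shift_r assms)
  have i2: "(\<lambda>t. k * (exp (- s * t) * (V (x + t) - V x))) integrable_on {0..\<delta>}"
    by (intro integrable_continuous_real continuous_intros cont_shift_r assms)
  have "(\<lambda>\<tau>. exp (- s * \<tau>) * (U (x + \<tau>) - U x - k * (V (x + \<tau>) - V x))) =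
        (\<lambda>t. exp (- s * t) * (U (x + t) - U x) - k * (exp (- s * t) * (V (x + t) - V x)))"
    by (rule ext) (simp add: algebra_simps)
  then have "integral {0..\<delta>} (\<lambda>\<tau>. exp (- s * \<tau>) * (U (x + \<tau>) - U x - k * (V (x + \<tau>) - V x))) =
     integral {0..\<delta>} (\<lambda>t. exp (- s * t) * (U (x + t) - U x)) - k * integral {0..\<delta>} (\<lambda>t. exp (- s * t) * (V (x + t) - V x))"
    using integral_diff[OF i1 i2] by simp
  moreover have "LDr1 U x \<delta> s = (s\<^sup>2) * integral {0..\<delta>} (\<lambda>t. exp (- s * t) * (U (x + t) - U x))"
    "LDr1 V x \<delta> s = (s\<^sup>2) * integral {0..\<delta>} (\<lambda>t. exp (- s * t) * (V (x + t) - V x))"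
    unfolding LDr1_def by simp_all
  ultimately show ?thesis
    by (simp only: ) (simp add: algebra_simps del: integral_mult_right integral_mult_left)
qed

lemma LDl1_lin:
  assumes "continuous_on {x-\<delta>..x} U" "continuous_on {x-\<delta>..x} V"
  shows "LDl1 U x \<delta> s - k * LDl1 V x \<delta> s =
    - (s\<^sup>2 * integral {0..\<delta>} (\<lambda>\<tau>. exp (- s * \<tau>) * (U (x - \<tau>) - U x - k * (V (x - \<tau>) - V x))))"
proof -
  have i1: "(\<lambda>t. exp (- s * t) * (U (x - t) - U x)) integrable_on {0..\<delta>}"
    by (intro integrable_continuous_real continuous_intros cont_shift_l assms)
  have i2: "(\<lambda>t. k * (exp (- s * t) * (V (x - t) - V x))) integrable_on {0..\<delta>}"
    by (intro integrable_continuous_real continuous_intros cont_shift_l assms)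
  have "(\<lambda>\<tau>. exp (- s * \<tau>) * (U (x - \<tau>) - U x - k * (V (x - \<tau>) - V x))) =
        (\<lambda>t. exp (- s * t) * (U (x - t) - U x) - k * (exp (- s * t) * (V (x - t) - V x)))"
    by (rule ext) (simp add: algebra_simps)
  then have "integral {0..\<delta>} (\<lambda>\<tau>. exp (- s * \<tau>) * (U (x - \<tau>) - U x - k * (V (x - \<tau>) - V x))) =
     integral {0..\<delta>} (\<lambda>t. exp (- s * t) * (U (x - t) - U x)) - k * integral {0..\<delta>} (\<lambda>t. exp (- s * t) * (V (x - t) - V x))"
    using integral_diff[OF i1 i2] by simp
  moreover have "LDl1 U x \<delta> s = - (s\<^sup>2) * integral {0..\<delta>} (\<lambda>t. exp (- s * t) * (U (x - t) - U x))"
    "LDl1 V x \<delta> s = - (s\<^sup>2) * integral {0..\<delta>} (\<lambda>t. exp (- s * t) * (V (x - t) - V x))"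
    unfolding LDl1_def by simp_all
  ultimately show ?thesis
    by (simp only: ) (simp add: algebra_simps del: integral_mult_right integral_mult_left)
qed

definition MU :: "real \<Rightarrow> real \<Rightarrow> nat \<Rightarrow> (real \<Rightarrow> real) \<Rightarrow> real \<Rightarrow> real" where
  "MU a b n U y = U y * (b - y) ^ n + integral {a..y} (\<lambda>\<sigma>. real n * U \<sigma> * (b - \<sigma>) ^ (n - 1))"

lemma MU_cont:
  assumes "continuous_on {a..b} U"
  shows "continuous_on {a..b} (MU a b n U)"
proof -
  have "(\<lambda>\<sigma>. real n * U \<sigma> * (b - \<sigma>) ^ (n - 1)) integrable_on {a..b}"
    by (intro integrable_continuous_real continuous_intros assms)
  then have "continuous_on {a..b} (\<lambda>y. integral {a..y} (\<lambda>\<sigma>. real n * U \<sigma> * (b - \<sigma>) ^ (n - 1)))"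
    by (rule indefinite_integral_continuous_1)
  then show ?thesis unfolding MU_def by (intro continuous_intros assms)
qed

lemma MU_small:
  assumes cont: "continuous_on {a..b} U" and t: "t \<in> {a..b}" and n: "n \<ge> 1"
  shows "\<forall>\<epsilon>>0. \<exists>\<eta>>0. \<forall>y\<in>{a..b}. \<bar>y - t\<bar> < \<eta> \<longrightarrow>
     \<bar>MU a b n U y - MU a b n U t - (b - t) ^ n * (U y - U t)\<bar> \<le> \<epsilon> * \<bar>y - t\<bar>"
proof (intro allI impI)
  fix \<epsilon> :: real assume eps: "\<epsilon> > 0"
  define I where "I y = integral {a..y} (\<lambda>\<sigma>. real n * U \<sigma> * (b - \<sigma>) ^ (n - 1))" for y
  define P where "P y = (b - y) ^ n" for y
  define B where "B y = U t * P y + I y" for y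
  define DP where "DP = - (real n * (b - t) ^ (n - 1))"
  have dI: "(I has_real_derivative (real n * U t * (b - t) ^ (n - 1))) (at t within {a..b})"
    unfolding I_def by (rule integral_has_real_derivative[OF _ t]) (intro continuous_intros cont)
  have dP: "(P has_real_derivative DP) (at t within {a..b})"
    unfolding P_def DP_def by (auto intro!: derivative_eq_intros)
  have dB: "(B has_real_derivative 0) (at t within {a..b})"
  proof -
    have "(B has_real_derivative (U t * DP + real n * U t * (b - t) ^ (n - 1))) (at t within {a..b})"
      unfolding B_def by (intro DERIV_add DERIV_cmult dP dI)
    moreover have "U t * DP + real n * U t * (b - t) ^ (n - 1) = 0" unfolding DP_def by simp
    ultimately show ?thesis by simp
  qed
  obtain \<eta>1 where e1: "\<eta>1 > 0" "\<forall>y\<in>{a..b}. \<bar>y - t\<bar> < \<eta>1 \<longrightarrow> \<bar>B y - B t\<bar> \<le> \<epsilon> / 2 * \<bar>y - t\<bar>"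
    using dB eps unfolding has_field_derivative_def has_derivative_within_alt by (auto dest!: spec[of _ "\<epsilon>/2"])
  obtain \<eta>2 where e2: "\<eta>2 > 0" "\<forall>y\<in>{a..b}. \<bar>y - t\<bar> < \<eta>2 \<longrightarrow> \<bar>P y - P t - DP * (y - t)\<bar> \<le> 1 * \<bar>y - t\<bar>"
    using dP unfolding has_field_derivative_def has_derivative_within_alt by (auto dest!: spec[of _ 1])
  define K where "K = \<bar>DP\<bar> + 1"
  have K: "K > 0" unfolding K_def by simp
  have Pb: "\<bar>P y - P t\<bar> \<le> K * \<bar>y - t\<bar>" if "y \<in> {a..b}" "\<bar>y - t\<bar> < \<eta>2" for y
  proof -
    have "\<bar>P y - P t - DP * (y - t)\<bar> \<le> \<bar>y - t\<bar>" using e2 that by auto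
    moreover have "\<bar>DP * (y - t)\<bar> = \<bar>DP\<bar> * \<bar>y - t\<bar>" by (simp add: abs_mult)
    ultimately show ?thesis unfolding K_def by (simp add: algebra_simps)
  qed
  obtain \<eta>3 where e3: "\<eta>3 > 0" "\<forall>y\<in>{a..b}. dist y t < \<eta>3 \<longrightarrow> dist (U y) (U t) < \<epsilon> / (2 * K)"
    using cont t eps K unfolding continuous_on_iff by (metis divide_pos_pos mult_pos_pos zero_less_numeral)
  show "\<exists>\<eta>>0. \<forall>y\<in>{a..b}. \<bar>y - t\<bar> < \<eta> \<longrightarrow>
     \<bar>MU a b n U y - MU a b n U t - (b - t) ^ n * (U y - U t)\<bar> \<le> \<epsilon> * \<bar>y - t\<bar>"
  proof (intro exI[of _ "min \<eta>1 (min \<eta>2 \<eta>3)"] conjI ballI impI)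
    show "min \<eta>1 (min \<eta>2 \<eta>3) > 0" using e1 e2 e3 by simp
    fix y assume y: "y \<in> {a..b}" "\<bar>y - t\<bar> < min \<eta>1 (min \<eta>2 \<eta>3)"
    have eq: "MU a b n U y - MU a b n U t - (b - t) ^ n * (U y - U t) = (U y - U t) * (P y - P t) + (B y - B t)"
      unfolding MU_def B_def P_def I_def by (simp add: algebra_simps)
    have "\<bar>U y - U t\<bar> \<le> \<epsilon> / (2 * K)" using e3 y by (auto simp: dist_real_def)
    moreover have "\<bar>P y - P t\<bar> \<le> K * \<bar>y - t\<bar>" using Pb y by auto
    ultimately have "\<bar>U y - U t\<bar> * \<bar>P y - P t\<bar> \<le> \<epsilon> / (2 * K) * (K * \<bar>y - t\<bar>)"
      by (intro mult_mono) auto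
    also have "\<dots> = \<epsilon> / 2 * \<bar>y - t\<bar>" using K by simp
    finally have 1: "\<bar>(U y - U t) * (P y - P t)\<bar> \<le> \<epsilon> / 2 * \<bar>y - t\<bar>" by (simp add: abs_mult)
    have 2: "\<bar>B y - B t\<bar> \<le> \<epsilon> / 2 * \<bar>y - t\<bar>" using e1 y by auto
    show "\<bar>MU a b n U y - MU a b n U t - (b - t) ^ n * (U y - U t)\<bar> \<le> \<epsilon> * \<bar>y - t\<bar>"
      unfolding eq using 1 2 by linarith
  qed
qed

lemma MU_major:
  assumes U: "laplace_major g a b U" and ab: "a < b" and n: "n \<ge> 1"
  shows "laplace_major (\<lambda>t. g t * (b - t) ^ n) a b (MU a b n U)"
proof -
  have cU: "continuous_on {a..b} U" using U major_iff by blast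
  have cM: "continuous_on {a..b} (MU a b n U)" by (rule MU_cont[OF cU])
  have "majpt (\<lambda>t. g t * (b - t) ^ n) a b (MU a b n U) t \<delta>" if t: "t \<in> {a..b}" and mp: "majpt g a b U t \<delta>" for t \<delta>
  proof -
    define k where "k = (b - t) ^ n"
    have k: "k \<ge> 0" unfolding k_def using t by simp
    have adm: "admissible_delta a b t \<delta>" using mp unfolding majpt_def by blast
    then have dpos: "\<delta> > 0" unfolding admissible_delta_def by blast
    note sm = MU_small[OF cU t n]
    have r: "lbnd (LDr1 (MU a b n U) t \<delta>) (g t * (b - t) ^ n)" if tb: "t < b"
    proof -
      have tb': "t + \<delta> \<le> b" and lb: "lbnd (LDr1 U t \<delta>) (g t)"
        using adm mp tb unfolding admissible_delta_def majpt_def by auto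
      have sub: "{t..t+\<delta>} \<subseteq> {a..b}" using t tb' by auto
      have c1: "continuous_on {t..t+\<delta>} (MU a b n U)" by (rule continuous_on_subset[OF cM sub])
      have c2: "continuous_on {t..t+\<delta>} U" by (rule continuous_on_subset[OF cU sub])
      have "((\<lambda>s. s\<^sup>2 * integral {0..\<delta>} (\<lambda>\<tau>. exp (- s * \<tau>) *
          (MU a b n U (t + \<tau>) - MU a b n U t - k * (U (t + \<tau>) - U t)))) \<longlongrightarrow> 0) at_top"
      proof (rule small_tendsto[OF _ dpos])
        show "continuous_on {0..\<delta>} (\<lambda>\<tau>. MU a b n U (t + \<tau>) - MU a b n U t - k * (U (t + \<tau>) - U t))"
          using continuous_on_diff[OF cont_shift_r[OF c1] continuous_on_mult_left[OF cont_shift_r[OF c2], of k]] by simp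
        show "\<forall>\<epsilon>>0. \<exists>\<eta>>0. \<forall>\<tau>. 0 \<le> \<tau> \<and> \<tau> \<le> \<delta> \<and> \<tau> < \<eta> \<longrightarrow>
            \<bar>MU a b n U (t + \<tau>) - MU a b n U t - k * (U (t + \<tau>) - U t)\<bar> \<le> \<epsilon> * \<tau>"
        proof (intro allI impI)
          fix \<epsilon> :: real assume "\<epsilon> > 0"
          then obtain \<eta> where eta: "\<eta> > 0" "\<forall>y\<in>{a..b}. \<bar>y - t\<bar> < \<eta> \<longrightarrow>
              \<bar>MU a b n U y - MU a b n U t - (b - t) ^ n * (U y - U t)\<bar> \<le> \<epsilon> * \<bar>y - t\<bar>"
            using sm by blast
          show "\<exists>\<eta>>0. \<forall>\<tau>. 0 \<le> \<tau> \<and> \<tau> \<le> \<delta> \<and> \<tau> < \<eta> \<longrightarrow>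
            \<bar>MU a b n U (t + \<tau>) - MU a b n U t - k * (U (t + \<tau>) - U t)\<bar> \<le> \<epsilon> * \<tau>"
          proof (intro exI[of _ \<eta>] conjI allI impI)
            fix \<tau> assume "0 \<le> \<tau> \<and> \<tau> \<le> \<delta> \<and> \<tau> < \<eta>"
            then show "\<bar>MU a b n U (t + \<tau>) - MU a b n U t - k * (U (t + \<tau>) - U t)\<bar> \<le> \<epsilon> * \<tau>"
              using eta(2)[rule_format, of "t + \<tau>"] sub unfolding k_def by auto
          qed (use eta in auto)
        qed
      qed
      then have "((\<lambda>s. LDr1 (MU a b n U) t \<delta> s - k * LDr1 U t \<delta> s) \<longlongrightarrow> 0) at_top"
        unfolding LDr1_lin[OF c1 c2] .
      from lbnd_scale[OF lb k this] show ?thesis unfolding k_def by (simp add: mult.commute)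
    qed
    have l: "lbnd (LDl1 (MU a b n U) t \<delta>) (g t * (b - t) ^ n)" if at: "a < t"
    proof -
      have tb': "a \<le> t - \<delta>" and lb: "lbnd (LDl1 U t \<delta>) (g t)"
        using adm mp at unfolding admissible_delta_def majpt_def by auto
      have sub: "{t-\<delta>..t} \<subseteq> {a..b}" using t tb' by auto
      have c1: "continuous_on {t-\<delta>..t} (MU a b n U)" by (rule continuous_on_subset[OF cM sub])
      have c2: "continuous_on {t-\<delta>..t} U" by (rule continuous_on_subset[OF cU sub])
      have "((\<lambda>s. s\<^sup>2 * integral {0..\<delta>} (\<lambda>\<tau>. exp (- s * \<tau>) *
          (MU a b n U (t - \<tau>) - MU a b n U t - k * (U (t - \<tau>) - U t)))) \<longlongrightarrow> 0) at_top"
      proof (rule small_tendsto[OF _ dpos])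
        show "continuous_on {0..\<delta>} (\<lambda>\<tau>. MU a b n U (t - \<tau>) - MU a b n U t - k * (U (t - \<tau>) - U t))"
          using continuous_on_diff[OF cont_shift_l[OF c1] continuous_on_mult_left[OF cont_shift_l[OF c2], of k]] by simp
        show "\<forall>\<epsilon>>0. \<exists>\<eta>>0. \<forall>\<tau>. 0 \<le> \<tau> \<and> \<tau> \<le> \<delta> \<and> \<tau> < \<eta> \<longrightarrow>
            \<bar>MU a b n U (t - \<tau>) - MU a b n U t - k * (U (t - \<tau>) - U t)\<bar> \<le> \<epsilon> * \<tau>"
        proof (intro allI impI)
          fix \<epsilon> :: real assume "\<epsilon> > 0"
          then obtain \<eta> where eta: "\<eta> > 0" "\<forall>y\<in>{a..b}. \<bar>y - t\<bar> < \<eta> \<longrightarrow>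
              \<bar>MU a b n U y - MU a b n U t - (b - t) ^ n * (U y - U t)\<bar> \<le> \<epsilon> * \<bar>y - t\<bar>"
            using sm by blast
          show "\<exists>\<eta>>0. \<forall>\<tau>. 0 \<le> \<tau> \<and> \<tau> \<le> \<delta> \<and> \<tau> < \<eta> \<longrightarrow>
            \<bar>MU a b n U (t - \<tau>) - MU a b n U t - k * (U (t - \<tau>) - U t)\<bar> \<le> \<epsilon> * \<tau>"
          proof (intro exI[of _ \<eta>] conjI allI impI)
            fix \<tau> assume "0 \<le> \<tau> \<and> \<tau> \<le> \<delta> \<and> \<tau> < \<eta>"
            then show "\<bar>MU a b n U (t - \<tau>) - MU a b n U t - k * (U (t - \<tau>) - U t)\<bar> \<le> \<epsilon> * \<tau>"
              using eta(2)[rule_format, of "t - \<tau>"] sub unfolding k_def by auto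
          qed (use eta in auto)
        qed
      qed
      from tendsto_minus[OF this] have "((\<lambda>s. LDl1 (MU a b n U) t \<delta> s - k * LDl1 U t \<delta> s) \<longlongrightarrow> 0) at_top"
        unfolding LDl1_lin[OF c1 c2] by simp
      from lbnd_scale[OF lb k this] show ?thesis unfolding k_def by (simp add: mult.commute)
    qed
    show ?thesis unfolding majpt_def using adm r l by blast
  qed
  then show ?thesis using U cM unfolding major_iff by blast
qed

lemma MU_neg: "MU a b n (\<lambda>y. - V y) = (\<lambda>y. - MU a b n V y)"
proof
  fix y
  have "(\<lambda>\<sigma>. real n * - V \<sigma> * (b - \<sigma>) ^ (n - 1)) = (\<lambda>\<sigma>. - (real n * V \<sigma> * (b - \<sigma>) ^ (n - 1)))"
    by (rule ext) simp
  then show "MU a b n (\<lambda>y. - V y) y = - MU a b n V y" unfolding MU_def by (simp add: integral_neg)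
qed

lemma MU_minor:
  assumes V: "laplace_minor g a b V" and ab: "a < b" and n: "n \<ge> 1"
  shows "laplace_minor (\<lambda>t. g t * (b - t) ^ n) a b (MU a b n V)"
proof -
  have "laplace_major (\<lambda>t. - g t) a b (\<lambda>y. - V y)" using V minor_neg by blast
  from MU_major[OF this ab n] have "laplace_major (\<lambda>t. - g t * (b - t) ^ n) a b (\<lambda>y. - MU a b n V y)"
    unfolding MU_neg .
  then show ?thesis unfolding minor_neg by simp
qed

lemma powint:
  fixes a b :: real
  assumes "a \<le> b" "n \<ge> 1"
  shows "integral {a..b} (\<lambda>\<sigma>. real n * (b - \<sigma>) ^ (n - 1)) = (b - a) ^ n"
proof -
  define G where "G \<sigma> = - ((b - \<sigma>) ^ n)" for \<sigma> :: real
  have "((\<lambda>\<sigma>. real n * (b - \<sigma>) ^ (n - 1)) has_integral (G b - G a)) {a..b}"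
  proof (rule fundamental_theorem_of_calculus[OF assms(1)])
    fix y assume "y \<in> {a..b}"
    have "(G has_real_derivative real n * (b - y) ^ (n - 1)) (at y within {a..b})"
      unfolding G_def by (auto intro!: derivative_eq_intros)
    then show "(G has_vector_derivative real n * (b - y) ^ (n - 1)) (at y within {a..b})"
      by (simp add: has_real_derivative_iff_has_vector_derivative)
  qed
  moreover have "G b - G a = (b - a) ^ n" unfolding G_def using assms by simp
  ultimately show ?thesis by (metis integral_unique)
qed

lemma MU_value:
  assumes ab: "a \<le> b" and n: "n \<ge> 1" and cU: "continuous_on {a..b} U"
  shows "MU a b n U b - MU a b n U a = integral {a..b} (\<lambda>\<sigma>. real n * (U \<sigma> - U a) * (b - \<sigma>) ^ (n - 1))"
proof -
  have i1: "(\<lambda>\<sigma>. real n * U \<sigma> * (b - \<sigma>) ^ (n - 1)) integrable_on {a..b}"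
    by (intro integrable_continuous_real continuous_intros cU)
  have i2: "(\<lambda>\<sigma>. U a * (real n * (b - \<sigma>) ^ (n - 1))) integrable_on {a..b}"
    by (intro integrable_continuous_real continuous_intros)
  have "(\<lambda>\<sigma>. real n * (U \<sigma> - U a) * (b - \<sigma>) ^ (n - 1)) = (\<lambda>\<sigma>. real n * U \<sigma> * (b - \<sigma>) ^ (n - 1) - U a * (real n * (b - \<sigma>) ^ (n - 1)))"
    by (rule ext) (simp add: algebra_simps)
  then have "integral {a..b} (\<lambda>\<sigma>. real n * (U \<sigma> - U a) * (b - \<sigma>) ^ (n - 1)) =
     integral {a..b} (\<lambda>\<sigma>. real n * U \<sigma> * (b - \<sigma>) ^ (n - 1)) - U a * (b - a) ^ n"
    using integral_diff[OF i1 i2] powint[OF ab n] by simp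
  moreover have "MU a b n U b - MU a b n U a = integral {a..b} (\<lambda>\<sigma>. real n * U \<sigma> * (b - \<sigma>) ^ (n - 1)) - U a * (b - a) ^ n"
    unfolding MU_def using n by simp
  ultimately show ?thesis by simp
qed

lemma alg1: "(f::real) > 0 \<Longrightarrow> m > 0 \<Longrightarrow> A * p / f + (B * q + A * (m * p * (- 1))) / (m * f) = B * q / (m * f)"
  by (simp add: field_simps)

lemma alg2: "(fn::real) > 0 \<Longrightarrow> I = fn * (X - Sl) - u * v \<Longrightarrow> I = fn * (X - (Sl + u / fn * v))"
  by (simp add: right_diff_distrib distrib_left)

lemma taylor_deriv:
  fixes F :: "nat \<Rightarrow> real \<Rightarrow> real"
  assumes Fd: "\<forall>k<n. \<forall>y\<in>{a..x}. (F k has_real_derivative F (Suc k) y) (at y within {a..x})"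
    and y: "y \<in> {a..x}"
  shows "Suc j \<le> n \<Longrightarrow> ((\<lambda>z. \<Sum>k<Suc j. F k z * (x - z) ^ k / fact k) has_real_derivative
           F (Suc j) y * (x - y) ^ j / fact j) (at y within {a..x})"
proof (induction j)
  case 0
  then show ?case using Fd y by simp
next
  case (Suc j)
  have IH: "((\<lambda>z. \<Sum>k<Suc j. F k z * (x - z) ^ k / fact k) has_real_derivative
           F (Suc j) y * (x - y) ^ j / fact j) (at y within {a..x})" using Suc by simp
  have dF: "(F (Suc j) has_real_derivative F (Suc (Suc j)) y) (at y within {a..x})"
    using Fd y Suc.prems by auto
  have dT: "((\<lambda>z. F (Suc j) z * (x - z) ^ Suc j / fact (Suc j)) has_real_derivative
     (F (Suc (Suc j)) y * (x - y) ^ Suc j + F (Suc j) y * (real (Suc j) * (x - y) ^ j * (- 1))) / fact (Suc j)) (at y within {a..x})"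
  proof -
    have dP: "((\<lambda>z. (x - z) ^ Suc j) has_real_derivative real (Suc j) * (x - y) ^ j * (- 1)) (at y within {a..x})"
      by (rule DERIV_cong, rule DERIV_power_Suc, rule DERIV_cong, rule DERIV_diff, rule DERIV_const, rule DERIV_ident) auto
    show ?thesis
      by (rule DERIV_cdivide, rule DERIV_cong, rule DERIV_mult'[OF dF dP]) (simp add: algebra_simps)
  qed
  have eq: "F (Suc j) y * (x - y) ^ j / fact j + (F (Suc (Suc j)) y * (x - y) ^ Suc j + F (Suc j) y * (real (Suc j) * (x - y) ^ j * (- 1))) / fact (Suc j)
     = F (Suc (Suc j)) y * (x - y) ^ Suc j / fact (Suc j)"
  proof -
    have fj: "(fact j :: real) > 0" by simp
    have fs: "(fact (Suc j) :: real) = real (Suc j) * fact j" by simp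
    show ?thesis unfolding fs by (rule alg1[OF fj]) simp
  qed
  have "((\<lambda>z. (\<Sum>k<Suc j. F k z * (x - z) ^ k / fact k) + F (Suc j) z * (x - z) ^ Suc j / fact (Suc j)) has_real_derivative
     F (Suc (Suc j)) y * (x - y) ^ Suc j / fact (Suc j)) (at y within {a..x})"
    using DERIV_add[OF IH dT] unfolding eq .
  then show ?case by simp
qed

lemma taylor_int:
  fixes F :: "nat \<Rightarrow> real \<Rightarrow> real"
  assumes Fd: "\<forall>k<n. \<forall>y\<in>{a..x}. (F k has_real_derivative F (Suc k) y) (at y within {a..x})"
    and ax: "a \<le> x" and n: "n \<ge> 1" and cF: "continuous_on {a..x} (F n)"
  shows "integral {a..x} (\<lambda>\<sigma>. real n * (F n \<sigma> - F n a) * (x - \<sigma>) ^ (n - 1))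
       = fact n * (F 0 x - (\<Sum>k\<le>n. F k a / fact k * (x - a) ^ k))"
proof -
  obtain j where j: "n = Suc j" using n by (cases n) auto
  define T where "T z = (\<Sum>k<Suc j. F k z * (x - z) ^ k / fact k)" for z
  define Sl where "Sl = (\<Sum>k<n. F k a / fact k * (x - a) ^ k)"
  have "((\<lambda>z. F n z * (x - z) ^ j / fact j) has_integral T x - T a) {a..x}"
  proof (rule fundamental_theorem_of_calculus[OF ax])
    fix y assume y: "y \<in> {a..x}"
    show "(T has_vector_derivative F n y * (x - y) ^ j / fact j) (at y within {a..x})"
      using taylor_deriv[OF Fd y, of j] j unfolding T_def
      by (simp add: has_real_derivative_iff_has_vector_derivative)
  qed
  then have "integral {a..x} (\<lambda>z. F n z * (x - z) ^ j / fact j) = T x - T a" by (rule integral_unique)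
  moreover have "T x = F 0 x" unfolding T_def by (simp add: zero_power sum.lessThan_Suc_shift del: sum.lessThan_Suc)
  moreover have "T a = (\<Sum>k<n. F k a / fact k * (x - a) ^ k)"
    unfolding T_def j by (intro sum.cong refl) simp
  ultimately have A: "integral {a..x} (\<lambda>z. F n z * (x - z) ^ j / fact j) = F 0 x - Sl"
    unfolding Sl_def by simp
  have S: "(\<Sum>k\<le>n. F k a / fact k * (x - a) ^ k) = Sl + F n a / fact n * (x - a) ^ n"
    unfolding Sl_def by (simp add: lessThan_Suc_atMost[symmetric])
  have "integral {a..x} (\<lambda>\<sigma>. real n * (F n \<sigma> - F n a) * (x - \<sigma>) ^ (n - 1)) = MU a x n (F n) x - MU a x n (F n) a"
    using MU_value[OF ax n cF] by simp
  also have "\<dots> = integral {a..x} (\<lambda>\<sigma>. real n * F n \<sigma> * (x - \<sigma>) ^ (n - 1)) - F n a * (x - a) ^ n"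
    unfolding MU_def using n by simp
  also have "integral {a..x} (\<lambda>\<sigma>. real n * F n \<sigma> * (x - \<sigma>) ^ (n - 1)) = fact n * integral {a..x} (\<lambda>z. F n z * (x - z) ^ j / fact j)"
  proof -
    have "(\<lambda>\<sigma>. real n * F n \<sigma> * (x - \<sigma>) ^ (n - 1)) = (\<lambda>z. fact n * (F n z * (x - z) ^ j / fact j))"
      unfolding j by (rule ext) (simp add: field_simps)
    then show ?thesis by simp
  qed
  finally have C: "integral {a..x} (\<lambda>\<sigma>. real n * (F n \<sigma> - F n a) * (x - \<sigma>) ^ (n - 1)) =
     fact n * integral {a..x} (\<lambda>z. F n z * (x - z) ^ j / fact j) - F n a * (x - a) ^ n" .
  show ?thesis unfolding S by (rule alg2[OF _ C[unfolded A]]) simp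
qed




lemma integ_bounds:
  assumes I: "laplace_integrable g c d" and U: "laplace_major g c d U" and V: "laplace_minor g c d V"
  shows "V d - V c \<le> laplace_integral g c d" "laplace_integral g c d \<le> U d - U c"
proof -
  obtain r where r: "laplace_upper_int g c d = ereal r" using I unfolding laplace_integrable_def
    by (cases "laplace_upper_int g c d") auto
  have lr: "laplace_lower_int g c d = ereal r" using I r unfolding laplace_integrable_def by simp
  have li: "laplace_integral g c d = r" unfolding laplace_integral_def r by simp
  have "ereal r \<le> ereal (U d - U c)" unfolding r[symmetric] laplace_upper_int_def
    by (rule INF_lower) (use U in simp)
  then show "laplace_integral g c d \<le> U d - U c" using li by simp
  have "ereal (V d - V c) \<le> ereal r" unfolding lr[symmetric] laplace_lower_int_def
    by (rule SUP_upper) (use V in simp)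
  then show "V d - V c \<le> laplace_integral g c d" using li by simp
qed

lemma approx:
  fixes G g :: "real \<Rightarrow> real"
  assumes ax: "a < x" and FTC: "\<forall>y\<in>{a..x}. laplace_integrable g a y \<and> G y - G a = laplace_integral g a y"
    and e: "e > 0"
  shows "\<exists>U V. laplace_major g a x U \<and> laplace_minor g a x V \<and>
     (\<forall>y\<in>{a..x}. (U y - U a) - (G y - G a) \<le> e \<and> 0 \<le> (U y - U a) - (G y - G a) \<and>
                   (G y - G a) - (V y - V a) \<le> e \<and> 0 \<le> (G y - G a) - (V y - V a))"
proof -
  have I: "laplace_integrable g a x" using FTC ax by auto
  obtain r where r: "laplace_upper_int g a x = ereal r" using I unfolding laplace_integrable_def
    by (cases "laplace_upper_int g a x") auto
  have lr: "laplace_lower_int g a x = ereal r" using I r unfolding laplace_integrable_def by simp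
  have "laplace_upper_int g a x < ereal (r + e / 2)" using r e by simp
  then obtain U where U: "laplace_major g a x U" "U x - U a < r + e / 2"
    unfolding laplace_upper_int_def INF_less_iff by auto
  have "ereal (r - e / 2) < laplace_lower_int g a x" using lr e by simp
  then obtain V where V: "laplace_minor g a x V" "r - e / 2 < V x - V a"
    unfolding laplace_lower_int_def less_SUP_iff by auto
  have "(U y - U a) - (G y - G a) \<le> e \<and> 0 \<le> (U y - U a) - (G y - G a) \<and>
        (G y - G a) - (V y - V a) \<le> e \<and> 0 \<le> (G y - G a) - (V y - V a)" if y: "y \<in> {a..x}" for y
  proof -
    have Iy: "laplace_integrable g a y" and Gy: "G y - G a = laplace_integral g a y" using FTC y by auto
    have Uy: "laplace_major g a y U" by (rule major_restrict[OF U(1)]) (use y in auto)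
    have Vy: "laplace_minor g a y V" by (rule minor_restrict[OF V(1)]) (use y in auto)
    note b = integ_bounds[OF Iy Uy Vy]
    have Uy': "laplace_major g y x U" by (rule major_restrict[OF U(1)]) (use y in auto)
    have Vy': "laplace_minor g y x V" by (rule minor_restrict[OF V(1)]) (use y in auto)
    have c: "V x - V y \<le> U x - U y" by (rule compare[OF Uy' Vy']) (use y in auto)
    show ?thesis using b c U(2) V(2) Gy by linarith
  qed
  then show ?thesis using U(1) V(1) by blast
qed

lemma trivial_int: "laplace_integrable h a a \<and> laplace_integral h a a = 0"
proof -
  have maj: "laplace_major h a a U" for U
    unfolding major_iff majpt_def admissible_delta_def by (auto intro!: exI[of _ 1])
  have min: "laplace_minor h a a U" for U
    unfolding minor_iff minpt_def admissible_delta_def by (auto intro!: exI[of _ 1])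
  have "laplace_upper_int h a a = 0" unfolding laplace_upper_int_def using maj
    by (simp add: zero_ereal_def[symmetric])
  moreover have "laplace_lower_int h a a = 0" unfolding laplace_lower_int_def using min
    by (simp add: zero_ereal_def[symmetric])
  ultimately show ?thesis unfolding laplace_integrable_def laplace_integral_def by simp
qed

lemma ereal_squeeze:
  assumes "\<forall>e>0. ereal (v - e) \<le> S \<and> S \<le> ereal (v + e)"
  shows "S = ereal v"
proof -
  have "ereal (v - 1) \<le> S" "S \<le> ereal (v + 1)" using assms by auto
  then obtain r where r: "S = ereal r" by (cases S) auto
  have *: "\<forall>e>0. v - e \<le> r \<and> r \<le> v + e" using assms r by auto
  have "r \<le> v"
  proof (rule field_le_epsilon)
    fix e :: real assume "e > 0" then show "r \<le> v + e" using * by auto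
  qed
  moreover have "v \<le> r"
  proof (rule field_le_epsilon)
    fix e :: real assume "e > 0" then have "v - e \<le> r" using * by auto
    then show "v \<le> r + e" by simp
  qed
  ultimately have "r = v" by simp
  then show ?thesis using r by simp
qed

lemma Jcmp:
  fixes \<Phi> \<Psi> :: "real \<Rightarrow> real"
  assumes ax: "a \<le> x" and n: "n \<ge> 1" and c1: "continuous_on {a..x} \<Phi>" and c2: "continuous_on {a..x} \<Psi>"
    and le: "\<forall>\<sigma>\<in>{a..x}. \<Phi> \<sigma> - \<Phi> a \<le> (\<Psi> \<sigma> - \<Psi> a) + c"
  shows "integral {a..x} (\<lambda>\<sigma>. real n * (\<Phi> \<sigma> - \<Phi> a) * (x - \<sigma>) ^ (n - 1))
      \<le> integral {a..x} (\<lambda>\<sigma>. real n * (\<Psi> \<sigma> - \<Psi> a) * (x - \<sigma>) ^ (n - 1)) + c * (x - a) ^ n"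
proof -
  have i1: "(\<lambda>\<sigma>. real n * (\<Phi> \<sigma> - \<Phi> a) * (x - \<sigma>) ^ (n - 1)) integrable_on {a..x}"
    by (intro integrable_continuous_real continuous_intros c1)
  have i2: "(\<lambda>\<sigma>. real n * (\<Psi> \<sigma> - \<Psi> a) * (x - \<sigma>) ^ (n - 1)) integrable_on {a..x}"
    by (intro integrable_continuous_real continuous_intros c2)
  have i3: "(\<lambda>\<sigma>. c * (real n * (x - \<sigma>) ^ (n - 1))) integrable_on {a..x}"
    by (intro integrable_continuous_real continuous_intros)
  have "integral {a..x} (\<lambda>\<sigma>. real n * (\<Phi> \<sigma> - \<Phi> a) * (x - \<sigma>) ^ (n - 1))
      \<le> integral {a..x} (\<lambda>\<sigma>. real n * (\<Psi> \<sigma> - \<Psi> a) * (x - \<sigma>) ^ (n - 1) + c * (real n * (x - \<sigma>) ^ (n - 1)))"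
  proof (rule integral_le[OF i1 integrable_add[OF i2 i3]])
    fix \<sigma> assume \<sigma>: "\<sigma> \<in> {a..x}"
    have p: "real n * (x - \<sigma>) ^ (n - 1) \<ge> 0" using \<sigma> by simp
    have "(\<Phi> \<sigma> - \<Phi> a) * (real n * (x - \<sigma>) ^ (n - 1)) \<le> ((\<Psi> \<sigma> - \<Psi> a) + c) * (real n * (x - \<sigma>) ^ (n - 1))"
      by (rule mult_right_mono[OF _ p]) (use le \<sigma> in auto)
    then show "real n * (\<Phi> \<sigma> - \<Phi> a) * (x - \<sigma>) ^ (n - 1) \<le> real n * (\<Psi> \<sigma> - \<Psi> a) * (x - \<sigma>) ^ (n - 1) + c * (real n * (x - \<sigma>) ^ (n - 1))"
      by (simp add: algebra_simps)
  qed
  also have "\<dots> = integral {a..x} (\<lambda>\<sigma>. real n * (\<Psi> \<sigma> - \<Psi> a) * (x - \<sigma>) ^ (n - 1)) + c * (x - a) ^ n"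
    using integral_add[OF i2 i3] powint[OF ax n] by simp
  finally show ?thesis .
qed

lemma Jabs:
  fixes \<Phi> :: "real \<Rightarrow> real"
  assumes ax: "a \<le> x" and n: "n \<ge> 1" and c1: "continuous_on {a..x} \<Phi>"
    and le: "\<forall>\<sigma>\<in>{a..x}. \<bar>\<Phi> \<sigma> - \<Phi> a\<bar> \<le> M"
  shows "\<bar>integral {a..x} (\<lambda>\<sigma>. real n * (\<Phi> \<sigma> - \<Phi> a) * (x - \<sigma>) ^ (n - 1))\<bar> \<le> M * (x - a) ^ n"
proof -
  have c0: "continuous_on {a..x} (\<lambda>_. 0::real)" by simp
  have "integral {a..x} (\<lambda>\<sigma>. real n * (\<Phi> \<sigma> - \<Phi> a) * (x - \<sigma>) ^ (n - 1))
      \<le> integral {a..x} (\<lambda>\<sigma>. real n * ((\<lambda>_. 0::real) \<sigma> - (\<lambda>_. 0::real) a) * (x - \<sigma>) ^ (n - 1)) + M * (x - a) ^ n"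
    by (rule Jcmp[OF ax n c1 c0]) (use le in auto)
  moreover have "integral {a..x} (\<lambda>\<sigma>. real n * ((\<lambda>_. 0::real) \<sigma> - (\<lambda>_. 0::real) a) * (x - \<sigma>) ^ (n - 1))
      \<le> integral {a..x} (\<lambda>\<sigma>. real n * (\<Phi> \<sigma> - \<Phi> a) * (x - \<sigma>) ^ (n - 1)) + M * (x - a) ^ n"
    by (rule Jcmp[OF ax n c0 c1]) (use le in \<open>auto simp: abs_le_iff\<close>)
  ultimately show ?thesis by (simp add: abs_le_iff)
qed

lemma main_pos:
  fixes f :: "real \<Rightarrow> real" and F :: "nat \<Rightarrow> real \<Rightarrow> real"
    and g :: "real \<Rightarrow> real" and a b x :: real and n :: nat
  assumes ab: "a < b" and n: "n \<ge> 1"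
    and F0: "\<forall>x\<in>{a..b}. F 0 x = f x"
    and Fder: "\<forall>k<n. \<forall>x\<in>{a..b}. (F k has_real_derivative F (Suc k) x) (at x within {a..b})"
    and Fcont: "\<forall>k\<le>n. continuous_on {a..b} (F k)"
    and FTC: "\<forall>x\<in>{a..b}. laplace_integrable g a x \<and> F n x - F n a = laplace_integral g a x"
    and ax: "a < x" and xb: "x \<le> b"
  shows "laplace_integrable (\<lambda>t. g t * (x - t) ^ n) a x \<and>
     laplace_integral (\<lambda>t. g t * (x - t) ^ n) a x = integral {a..x} (\<lambda>\<sigma>. real n * (F n \<sigma> - F n a) * (x - \<sigma>) ^ (n - 1))"
proof -
  define V0 where "V0 = integral {a..x} (\<lambda>\<sigma>. real n * (F n \<sigma> - F n a) * (x - \<sigma>) ^ (n - 1))"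
  define h where "h t = g t * (x - t) ^ n" for t
  have FTC': "\<forall>y\<in>{a..x}. laplace_integrable g a y \<and> F n y - F n a = laplace_integral g a y"
    using FTC xb by auto
  have cFx: "continuous_on {a..x} (F n)" using Fcont xb by (auto intro: continuous_on_subset)
  define K where "K = (x - a) ^ n"
  have K: "K > 0" unfolding K_def using ax by simp
  have key: "ereal (V0 - e) \<le> laplace_upper_int h a x \<and> laplace_upper_int h a x \<le> ereal (V0 + e) \<and>
             ereal (V0 - e) \<le> laplace_lower_int h a x \<and> laplace_lower_int h a x \<le> ereal (V0 + e)" if e: "e > 0" for e
  proof -
    obtain U V where U: "laplace_major g a x U" and V: "laplace_minor g a x V" and
      UV: "\<forall>y\<in>{a..x}. (U y - U a) - (F n y - F n a) \<le> e / K \<and> 0 \<le> (U y - U a) - (F n y - F n a) \<and>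
                   (F n y - F n a) - (V y - V a) \<le> e / K \<and> 0 \<le> (F n y - F n a) - (V y - V a)"
      using approx[OF ax FTC', of "e / K"] e K by auto
    have cU: "continuous_on {a..x} U" using U major_iff by blast
    have cV: "continuous_on {a..x} V" using V minor_iff by blast
    have ax': "a \<le> x" using ax by simp
    have MUv: "MU a x n U x - MU a x n U a \<le> V0 + e"
    proof -
      have "integral {a..x} (\<lambda>\<sigma>. real n * (U \<sigma> - U a) * (x - \<sigma>) ^ (n - 1)) \<le> V0 + e / K * (x - a) ^ n"
        unfolding V0_def by (rule Jcmp[OF ax' n cU cFx]) (use UV in auto)
      then show ?thesis using MU_value[OF ax' n cU] K unfolding K_def[symmetric] by simp
    qed
    have MVv: "V0 - e \<le> MU a x n V x - MU a x n V a"
    proof -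
      have "V0 \<le> integral {a..x} (\<lambda>\<sigma>. real n * (V \<sigma> - V a) * (x - \<sigma>) ^ (n - 1)) + e / K * (x - a) ^ n"
        unfolding V0_def by (rule Jcmp[OF ax' n cFx cV]) (use UV in auto)
      then show ?thesis using MU_value[OF ax' n cV] K unfolding K_def[symmetric] by simp
    qed
    have MUmaj: "laplace_major h a x (MU a x n U)" unfolding h_def by (rule MU_major[OF U ax n])
    have MVmin: "laplace_minor h a x (MU a x n V)" unfolding h_def by (rule MU_minor[OF V ax n])
    have u1: "laplace_upper_int h a x \<le> ereal (V0 + e)"
    proof -
      have 1: "laplace_upper_int h a x \<le> ereal (MU a x n U x - MU a x n U a)"
        unfolding laplace_upper_int_def by (rule INF_lower) (use MUmaj in simp)
      have 2: "ereal (MU a x n U x - MU a x n U a) \<le> ereal (V0 + e)" using MUv by simp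
      show ?thesis by (rule order_trans[OF 1 2])
    qed
    have u2: "ereal (V0 - e) \<le> laplace_upper_int h a x"
      unfolding laplace_upper_int_def
    proof (rule INF_greatest)
      fix W assume "W \<in> {U. laplace_major h a x U}"
      then have "MU a x n V x - MU a x n V a \<le> W x - W a" using compare[OF _ MVmin ax'] by blast
      then show "ereal (V0 - e) \<le> ereal (W x - W a)" using MVv by simp
    qed
    have l1: "ereal (V0 - e) \<le> laplace_lower_int h a x"
    proof -
      have 1: "ereal (MU a x n V x - MU a x n V a) \<le> laplace_lower_int h a x"
        unfolding laplace_lower_int_def by (rule SUP_upper) (use MVmin in simp)
      have 2: "ereal (V0 - e) \<le> ereal (MU a x n V x - MU a x n V a)" using MVv by simp
      show ?thesis by (rule order_trans[OF 2 1])
    qed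
    have l2: "laplace_lower_int h a x \<le> ereal (V0 + e)"
      unfolding laplace_lower_int_def
    proof (rule SUP_least)
      fix Z assume "Z \<in> {U. laplace_minor h a x U}"
      then have "Z x - Z a \<le> MU a x n U x - MU a x n U a" using compare[OF MUmaj _ ax'] by blast
      then show "ereal (Z x - Z a) \<le> ereal (V0 + e)" using MUv by simp
    qed
    show ?thesis using u1 u2 l1 l2 by blast
  qed
  have up: "laplace_upper_int h a x = ereal V0" by (rule ereal_squeeze) (use key in auto)
  have lo: "laplace_lower_int h a x = ereal V0" by (rule ereal_squeeze) (use key in auto)
  have "laplace_integrable h a x" unfolding laplace_integrable_def up lo by simp
  moreover have "laplace_integral h a x = V0" unfolding laplace_integral_def up by simp
  ultimately show ?thesis unfolding h_def[abs_def] V0_def by simp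
qed

theorem theorem9p1:
  fixes f :: "real \<Rightarrow> real" and F :: "nat \<Rightarrow> real \<Rightarrow> real"
    and g :: "real \<Rightarrow> real" and N :: "real set" and a b :: real and n :: nat
  assumes ab: "a < b"
    and F0: "\<forall>x\<in>{a..b}. F 0 x = f x"
    and Fder: "\<forall>k<n. \<forall>x\<in>{a..b}. (F k has_real_derivative F (Suc k) x) (at x within {a..b})"
    and Fcont: "\<forall>k\<le>n. continuous_on {a..b} (F k)"
    and N: "N \<in> null_sets lebesgue"
    and LD: "\<forall>x\<in>{a..b} - N. has_LD F n a b x (g x)"
    and gint: "laplace_integrable g a b"
    and FTC: "\<forall>x\<in>{a..b}. laplace_integrable g a x \<and> F n x - F n a = laplace_integral g a x"
  shows "(\<forall>x\<in>{a..b}. laplace_integrable (\<lambda>t. g t * (x - t) ^ n) a x \<and>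
            f x = (\<Sum>k\<le>n. F k a / fact k * (x - a) ^ k)
                  + 1 / fact n * laplace_integral (\<lambda>t. g t * (x - t) ^ n) a x) \<and>
         (SUP x\<in>{a..b}. \<bar>1 / fact n * laplace_integral (\<lambda>t. g t * (x - t) ^ n) a x\<bar>)
           \<le> (b - a) ^ n / fact n * alexiewicz_norm g a b"
proof (cases "n = 0")
  case True
  have 1: "\<forall>x\<in>{a..b}. laplace_integrable (\<lambda>t. g t * (x - t) ^ n) a x \<and>
            f x = (\<Sum>k\<le>n. F k a / fact k * (x - a) ^ k)
                  + 1 / fact n * laplace_integral (\<lambda>t. g t * (x - t) ^ n) a x"
  proof
    fix x assume x: "x \<in> {a..b}"
    have "F 0 a = f a" "F 0 x = f x" using F0 x ab by auto
    then show "laplace_integrable (\<lambda>t. g t * (x - t) ^ n) a x \<and>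
            f x = (\<Sum>k\<le>n. F k a / fact k * (x - a) ^ k)
                  + 1 / fact n * laplace_integral (\<lambda>t. g t * (x - t) ^ n) a x"
    proof -
      have "laplace_integrable g a x" "F 0 x - F 0 a = laplace_integral g a x" using FTC x True by auto
      then show ?thesis using \<open>F 0 a = f a\<close> \<open>F 0 x = f x\<close> True by simp
    qed
  qed
  have 2: "(SUP x\<in>{a..b}. \<bar>1 / fact n * laplace_integral (\<lambda>t. g t * (x - t) ^ n) a x\<bar>)
           \<le> (b - a) ^ n / fact n * alexiewicz_norm g a b"
    using True unfolding alexiewicz_norm_def by simp
  show ?thesis using 1 2 by blast
next
  case False
  then have n: "n \<ge> 1" by simp
  define A where "A = alexiewicz_norm g a b"
  have cFn: "continuous_on {a..b} (F n)" using Fcont by simp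
  have Aeq: "A = (SUP y\<in>{a..b}. \<bar>F n y - F n a\<bar>)"
    unfolding A_def alexiewicz_norm_def using FTC by (intro SUP_cong) auto
  obtain B where B: "\<And>y. y \<in> {a..b} \<Longrightarrow> \<bar>F n y - F n a\<bar> \<le> B"
  proof -
    have "continuous_on {a..b} (\<lambda>y. F n y - F n a)" by (intro continuous_intros cFn)
    from bound_cont[OF this] show ?thesis using that by blast
  qed
  have bdd: "bdd_above ((\<lambda>y. \<bar>F n y - F n a\<bar>) ` {a..b})" using B by (intro bdd_aboveI2[of _ _ B]) auto
  have Ale: "\<bar>F n y - F n a\<bar> \<le> A" if "y \<in> {a..b}" for y
    unfolding Aeq by (rule cSUP_upper[OF that bdd])
  have A0: "A \<ge> 0" using Ale[of a] ab by simp
  have per: "laplace_integrable (\<lambda>t. g t * (x - t) ^ n) a x \<and>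
            f x = (\<Sum>k\<le>n. F k a / fact k * (x - a) ^ k)
                  + 1 / fact n * laplace_integral (\<lambda>t. g t * (x - t) ^ n) a x \<and>
            \<bar>1 / fact n * laplace_integral (\<lambda>t. g t * (x - t) ^ n) a x\<bar> \<le> (b - a) ^ n / fact n * A"
    if x: "x \<in> {a..b}" for x
  proof (cases "x = a")
    case True
    obtain m where m: "n = Suc m" using n by (cases n) auto
    have "(\<Sum>k\<le>n. F k a / fact k * (a - a) ^ k) = F 0 a"
      unfolding m sum.atMost_Suc_shift by simp
    moreover have "F 0 a = f a" using F0 ab by auto
    moreover have "0 \<le> (b - a) ^ n / fact n * A" using ab A0 by simp
    ultimately show ?thesis using trivial_int[of "\<lambda>t. g t * (a - t) ^ n" a] True by simp
  next
    case False
    then have ax: "a < x" and xb: "x \<le> b" using x by auto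
    note M = main_pos[OF ab n F0 Fder Fcont FTC ax xb]
    have Fder': "\<forall>k<n. \<forall>y\<in>{a..x}. (F k has_real_derivative F (Suc k) y) (at y within {a..x})"
    proof (intro allI impI ballI)
      fix k y assume k: "k < n" and y: "y \<in> {a..x}"
      have "(F k has_real_derivative F (Suc k) y) (at y within {a..b})" using Fder k y xb by auto
      then show "(F k has_real_derivative F (Suc k) y) (at y within {a..x})"
        by (rule DERIV_subset) (use xb in auto)
    qed
    have cFx: "continuous_on {a..x} (F n)" using cFn xb by (auto intro: continuous_on_subset)
    have T: "integral {a..x} (\<lambda>\<sigma>. real n * (F n \<sigma> - F n a) * (x - \<sigma>) ^ (n - 1))
       = fact n * (F 0 x - (\<Sum>k\<le>n. F k a / fact k * (x - a) ^ k))"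
      by (rule taylor_int[OF Fder' _ n cFx]) (use ax in simp)
    have fx: "F 0 x = f x" using F0 x by auto
    have eq2: "f x = (\<Sum>k\<le>n. F k a / fact k * (x - a) ^ k)
                  + 1 / fact n * laplace_integral (\<lambda>t. g t * (x - t) ^ n) a x"
      using M T fx by simp
    have "\<bar>integral {a..x} (\<lambda>\<sigma>. real n * (F n \<sigma> - F n a) * (x - \<sigma>) ^ (n - 1))\<bar> \<le> A * (x - a) ^ n"
      by (rule Jabs[OF _ n cFx]) (use ax xb Ale in auto)
    also have "\<dots> \<le> A * (b - a) ^ n"
      by (rule mult_left_mono[OF power_mono A0]) (use ax xb in auto)
    finally have "\<bar>laplace_integral (\<lambda>t. g t * (x - t) ^ n) a x\<bar> \<le> A * (b - a) ^ n" using M by simp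
    then have "\<bar>1 / fact n * laplace_integral (\<lambda>t. g t * (x - t) ^ n) a x\<bar> \<le> (b - a) ^ n / fact n * A"
      by (simp add: abs_mult field_simps)
    then show ?thesis using M eq2 by blast
  qed
  have "(SUP x\<in>{a..b}. \<bar>1 / fact n * laplace_integral (\<lambda>t. g t * (x - t) ^ n) a x\<bar>)
           \<le> (b - a) ^ n / fact n * A"
    by (rule cSUP_least) (use ab per in auto)
  then show ?thesis using per unfolding A_def by blast
qed

end
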